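(* A graph $G=(V,E)$ is chordal if and only if $\mathcal{P}_{x,y}(G)$ equals the set of $(x,y)\in\mathbb{R}^V\times\mathbb{R}^E$ satisfying \begin{align*} y(\delta(v)) &\le x_v && \text{for all } v\in V,\\ -y_e &\le 0 && \text{for all } e\in E,\\ x(K)-y(E(K)) &\le 1 && \text{for all maximal cliques } K \text{ of } G. \end{align*}
   Context: All graphs are simple and connected. A graph is chordal if it contains no induced cycle (hole) of length at least 4. For $W\subseteq V$, $E(W)$ is the set of edges with both endpoints in $W$, $\delta(v)$ is the set of edges incident to $v$, and $x(A)=\sum_{a\in A}x_a$. A co-2-plex of $G$ is a set $S\subseteq V$ such that $G[S]$ has maximum degree at most 1. $\mathcal{P}_{x,y}(G)=\mathrm{conv}\{(\chi^S,\zeta^{E(S)}) : S \text{ co-2-plex of } G\}$, where $\chi^S\in\{0,1\}^V$, $\zeta^{F}\in\{0,1\}^E$ are incidence vectors. *)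

theory Defs
  imports Main "HOL-Library.Indicator_Function"
begin

definition simple_graph :: "'a set \<Rightarrow> 'a set set \<Rightarrow> bool" where
  "simple_graph V E \<longleftrightarrow> finite V \<and>
     (\<forall>e\<in>E. \<exists>u v. u \<noteq> v \<and> u \<in> V \<and> v \<in> V \<and> e = {u, v})"

definition connected_graph :: "'a set \<Rightarrow> 'a set set \<Rightarrow> bool" where
  "connected_graph V E \<longleftrightarrow> V \<noteq> {} \<and>
     (\<forall>u\<in>V. \<forall>v\<in>V. (\<lambda>a b. {a, b} \<in> E)\<^sup>*\<^sup>* u v)"

definition has_hole :: "'a set \<Rightarrow> 'a set set \<Rightarrow> bool" where
  "has_hole V E \<longleftrightarrow> (\<exists>k::nat. \<exists>f::nat \<Rightarrow> 'a. k \<ge> 4 \<and> inj_on f {..<k} \<and> f ` {..<k} \<subseteq> V \<and>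
     (\<forall>i<k. \<forall>j<k. {f i, f j} \<in> E \<longleftrightarrow> (j = Suc i mod k \<or> i = Suc j mod k)))"

definition chordal :: "'a set \<Rightarrow> 'a set set \<Rightarrow> bool" where
  "chordal V E \<longleftrightarrow> \<not> has_hole V E"

definition clique :: "'a set \<Rightarrow> 'a set set \<Rightarrow> 'a set \<Rightarrow> bool" where
  "clique V E K \<longleftrightarrow> K \<subseteq> V \<and> (\<forall>u\<in>K. \<forall>v\<in>K. u \<noteq> v \<longrightarrow> {u, v} \<in> E)"

definition maximal_clique :: "'a set \<Rightarrow> 'a set set \<Rightarrow> 'a set \<Rightarrow> bool" where
  "maximal_clique V E K \<longleftrightarrow> clique V E K \<and> (\<forall>K'. clique V E K' \<and> K \<subseteq> K' \<longrightarrow> K' = K)"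

definition edges_in :: "'a set set \<Rightarrow> 'a set \<Rightarrow> 'a set set" where
  "edges_in E W = {e \<in> E. e \<subseteq> W}"

definition delta :: "'a set set \<Rightarrow> 'a \<Rightarrow> 'a set set" where
  "delta E v = {e \<in> E. v \<in> e}"

definition co_2_plex :: "'a set \<Rightarrow> 'a set set \<Rightarrow> 'a set \<Rightarrow> bool" where
  "co_2_plex V E S \<longleftrightarrow> S \<subseteq> V \<and> (\<forall>v\<in>S. card {u \<in> S. {u, v} \<in> E} \<le> 1)"

text \<open>Points of R^V x R^E are pairs of functions (zero outside V resp. E).
  P_{x,y}(G) is the convex hull of the incidence vectors (chi^S, zeta^{E(S)}),
  written out as the set of convex combinations of these finitely many points.\<close>
definition P_xy :: "'a set \<Rightarrow> 'a set set \<Rightarrow> (('a \<Rightarrow> real) \<times> ('a set \<Rightarrow> real)) set" where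
  "P_xy V E = {(x, y). \<exists>lam :: 'a set \<Rightarrow> real.
     (\<forall>S. co_2_plex V E S \<longrightarrow> lam S \<ge> 0) \<and>
     (\<Sum>S\<in>{S. co_2_plex V E S}. lam S) = 1 \<and>
     x = (\<lambda>v. \<Sum>S\<in>{S. co_2_plex V E S}. lam S * indicator S v) \<and>
     y = (\<lambda>e. \<Sum>S\<in>{S. co_2_plex V E S}. lam S * indicator (edges_in E S) e)}"

definition clique_polyhedron :: "'a set \<Rightarrow> 'a set set \<Rightarrow> (('a \<Rightarrow> real) \<times> ('a set \<Rightarrow> real)) set" where
  "clique_polyhedron V E = {(x, y).
     (\<forall>v. v \<notin> V \<longrightarrow> x v = 0) \<and> (\<forall>e. e \<notin> E \<longrightarrow> y e = 0) \<and>
     (\<forall>v\<in>V. (\<Sum>e\<in>delta E v. y e) \<le> x v) \<and>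
     (\<forall>e\<in>E. - y e \<le> 0) \<and>
     (\<forall>K. maximal_clique V E K \<longrightarrow> (\<Sum>v\<in>K. x v) - (\<Sum>e\<in>edges_in E K. y e) \<le> 1)}"

end

theory Submission
  imports Defs "HOL-Library.Indicator_Function"
begin

lemma sg_finite: "simple_graph V E \<Longrightarrow> finite V"
  by (simp add: simple_graph_def)

lemma sg_edge: "simple_graph V E \<Longrightarrow> e \<in> E \<Longrightarrow> \<exists>u v. u \<noteq> v \<and> u \<in> V \<and> v \<in> V \<and> e = {u, v}"
  by (simp add: simple_graph_def)

lemma sg_E_sub: "simple_graph V E \<Longrightarrow> E \<subseteq> Pow V"
  by (auto dest: sg_edge)

lemma sg_finite_E: "simple_graph V E \<Longrightarrow> finite E"
  using sg_E_sub sg_finite by (metis finite_Pow_iff finite_subset)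

lemma sg_noloop: "simple_graph V E \<Longrightarrow> {u} \<notin> E"
  by (force dest: sg_edge)

lemma sg_adj_in: "simple_graph V E \<Longrightarrow> {u, w} \<in> E \<Longrightarrow> u \<in> V \<and> w \<in> V"
  using sg_E_sub by blast

lemma sum_ind_real: "finite A \<Longrightarrow> (\<Sum>x\<in>A. indicator B x :: real) = real (card (A \<inter> B))"
  using sum_indicator_mult[where f="\<lambda>x. 1::real" and A=A and B=B] by simp

lemma fin_CP: "simple_graph V E \<Longrightarrow> finite {S. co_2_plex V E S}"
proof -
  assume "simple_graph V E"
  then have "finite (Pow V)" using sg_finite by auto
  moreover have "{S. co_2_plex V E S} \<subseteq> Pow V" by (auto simp: co_2_plex_def)
  ultimately show ?thesis using finite_subset by blast
qed

lemma co2_clique_bound: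
  assumes sg: "simple_graph V E" and S: "co_2_plex V E S" and K: "clique V E K"
  shows "real (card (K \<inter> S)) - real (card (edges_in E K \<inter> edges_in E S)) \<le> 1"
proof (cases "card (K \<inter> S) \<le> 1")
  case True then show ?thesis by simp
next
  case False
  have finK: "finite K" using K sg sg_finite by (auto simp: clique_def intro: finite_subset)
  have fin: "finite (K \<inter> S)" using finK by simp
  from False obtain u w where uw0: "u \<in> K \<inter> S" "w \<in> K \<inter> S" "u \<noteq> w"
    by (metis One_nat_def card_le_Suc0_iff_eq fin)
  then have uw: "u \<in> S \<inter> K" "w \<in> S \<inter> K" "u \<noteq> w" by auto
  have E1: "{u, w} \<in> E" using K uw by (auto simp: clique_def)
  have SK: "S \<inter> K = {u, w}"
  proof (rule ccontr)
    assume "S \<inter> K \<noteq> {u, w}"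
    then obtain z where z: "z \<in> S \<inter> K" "z \<noteq> u" "z \<noteq> w" using uw by blast
    have Ez: "{z, u} \<in> E" using K z uw by (auto simp: clique_def)
    have "{w, z} \<subseteq> {t \<in> S. {t, u} \<in> E}" using uw z E1 Ez by (auto simp: insert_commute)
    moreover have "finite {t \<in> S. {t, u} \<in> E}"
      using S sg sg_finite by (auto simp: co_2_plex_def intro: finite_subset)
    ultimately have "card {w, z} \<le> card {t \<in> S. {t, u} \<in> E}" by (simp add: card_mono)
    moreover have "card {t \<in> S. {t, u} \<in> E} \<le> 1" using S uw by (auto simp: co_2_plex_def)
    ultimately show False using z by simp
  qed
  have "{u, w} \<in> edges_in E K \<inter> edges_in E S" using E1 uw by (auto simp: edges_in_def)
  moreover have "finite (edges_in E K \<inter> edges_in E S)"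
    using sg_finite_E[OF sg] by (auto simp: edges_in_def)
  ultimately have "card (edges_in E K \<inter> edges_in E S) \<ge> 1"
    by (metis One_nat_def Suc_leI card_gt_0_iff empty_iff)
  then show ?thesis using SK uw by (simp add: Int_commute)
qed

lemma co2_degree_bound:
  assumes sg: "simple_graph V E" and S: "co_2_plex V E S"
  shows "real (card (delta E v \<inter> edges_in E S)) \<le> indicator S v"
proof (cases "v \<in> S")
  case False
  then have "delta E v \<inter> edges_in E S = {}" by (auto simp: delta_def edges_in_def)
  then show ?thesis using False by simp
next
  case True
  have "delta E v \<inter> edges_in E S \<subseteq> (\<lambda>t. {t, v}) ` {t \<in> S. {t, v} \<in> E}"
  proof
    fix e assume e: "e \<in> delta E v \<inter> edges_in E S"
    then obtain a b where ab: "a \<noteq> b" "e = {a, b}" using sg_edge[OF sg]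
      by (auto simp: delta_def) blast
    show "e \<in> (\<lambda>t. {t, v}) ` {t \<in> S. {t, v} \<in> E}"
    proof (cases "a = v")
      case True
      then show ?thesis using e ab by (auto simp: delta_def edges_in_def insert_commute intro!: image_eqI[where x=b])
    next
      case False
      then have "b = v" using e ab by (auto simp: delta_def)
      then show ?thesis using e ab by (auto simp: delta_def edges_in_def intro!: image_eqI[where x=a])
    qed
  qed
  moreover have "finite {t \<in> S. {t, v} \<in> E}"
    using S sg sg_finite by (auto simp: co_2_plex_def intro: finite_subset)
  ultimately have "card (delta E v \<inter> edges_in E S) \<le> card {t \<in> S. {t, v} \<in> E}"
    by (meson card_image_le card_mono finite_imageI le_trans)
  also have "\<dots> \<le> 1" using S True by (auto simp: co_2_plex_def)
  finally show ?thesis using True by simp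
qed

lemma P_sub_Q:
  assumes sg: "simple_graph V E"
  shows "P_xy V E \<subseteq> clique_polyhedron V E"
proof
  fix p assume "p \<in> P_xy V E"
  then obtain x y lam where p: "p = (x, y)"
    and lam0: "\<forall>S. co_2_plex V E S \<longrightarrow> lam S \<ge> 0"
    and lam1: "(\<Sum>S\<in>{S. co_2_plex V E S}. lam S) = 1"
    and xd: "x = (\<lambda>v. \<Sum>S\<in>{S. co_2_plex V E S}. lam S * indicator S v)"
    and yd: "y = (\<lambda>e. \<Sum>S\<in>{S. co_2_plex V E S}. lam S * indicator (edges_in E S) e)"
    by (auto simp: P_xy_def)
  let ?C = "{S. co_2_plex V E S}"
  have finC: "finite ?C" by (rule fin_CP[OF sg])
  have finE: "finite E" by (rule sg_finite_E[OF sg])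
  have finV: "finite V" by (rule sg_finite[OF sg])
  have x0: "\<forall>v. v \<notin> V \<longrightarrow> x v = 0"
    unfolding xd by (auto intro!: sum.neutral simp: co_2_plex_def indicator_def)
  have y0: "\<forall>e. e \<notin> E \<longrightarrow> y e = 0"
    unfolding yd by (auto intro!: sum.neutral simp: edges_in_def indicator_def)
  have ynn: "\<forall>e. y e \<ge> 0"
    unfolding yd using lam0 by (auto intro!: sum_nonneg)
  have deg: "\<forall>v\<in>V. (\<Sum>e\<in>delta E v. y e) \<le> x v"
  proof
    fix v assume "v \<in> V"
    have fd: "finite (delta E v)" using finE by (simp add: delta_def)
    have "(\<Sum>e\<in>delta E v. y e) = (\<Sum>S\<in>?C. lam S * (\<Sum>e\<in>delta E v. indicator (edges_in E S) e))"
      unfolding yd by (simp add: sum.swap[of _ "delta E v"] sum_distrib_left)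
    also have "\<dots> = (\<Sum>S\<in>?C. lam S * real (card (delta E v \<inter> edges_in E S)))"
      using fd by (simp add: sum_ind_real)
    also have "\<dots> \<le> (\<Sum>S\<in>?C. lam S * indicator S v)"
      using lam0 co2_degree_bound[OF sg] by (auto intro!: sum_mono mult_left_mono)
    finally show "(\<Sum>e\<in>delta E v. y e) \<le> x v" unfolding xd by simp
  qed
  have cl: "\<forall>K. maximal_clique V E K \<longrightarrow> (\<Sum>v\<in>K. x v) - (\<Sum>e\<in>edges_in E K. y e) \<le> 1"
  proof (intro allI impI)
    fix K assume "maximal_clique V E K"
    then have K: "clique V E K" by (simp add: maximal_clique_def)
    have fK: "finite K" using K finV by (auto simp: clique_def intro: finite_subset)
    have fEK: "finite (edges_in E K)" using finE by (simp add: edges_in_def)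
    have "(\<Sum>v\<in>K. x v) = (\<Sum>S\<in>?C. lam S * real (card (K \<inter> S)))"
      unfolding xd using fK
      by (subst sum.swap) (simp add: sum_distrib_left[symmetric] sum_ind_real)
    moreover have "(\<Sum>e\<in>edges_in E K. y e) = (\<Sum>S\<in>?C. lam S * real (card (edges_in E K \<inter> edges_in E S)))"
      unfolding yd using fEK
      by (subst sum.swap) (simp add: sum_distrib_left[symmetric] sum_ind_real)
    ultimately have "(\<Sum>v\<in>K. x v) - (\<Sum>e\<in>edges_in E K. y e)
       = (\<Sum>S\<in>?C. lam S * (real (card (K \<inter> S)) - real (card (edges_in E K \<inter> edges_in E S))))"
      by (simp add: sum_subtractf right_diff_distrib)
    also have "\<dots> \<le> (\<Sum>S\<in>?C. lam S * 1)"
      using lam0 co2_clique_bound[OF sg _ K] by (intro sum_mono mult_left_mono) auto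
    finally show "(\<Sum>v\<in>K. x v) - (\<Sum>e\<in>edges_in E K. y e) \<le> 1" using lam1 by simp
  qed
  show "p \<in> clique_polyhedron V E"
    unfolding p clique_polyhedron_def using x0 y0 ynn deg cl by auto
qed


lemma smod: "i < (k::nat) \<Longrightarrow> Suc i mod k = (if Suc i = k then 0 else Suc i)"
  by (simp add: mod_Suc)

lemma tight0:
  fixes h :: "'b \<Rightarrow> real"
  shows "finite C \<Longrightarrow> (\<forall>S\<in>C. 0 \<le> h S) \<Longrightarrow> sum h C = 0 \<Longrightarrow> S \<in> C \<Longrightarrow> h S = 0"
  by (simp add: sum_nonneg_eq_0_iff)

lemma chain_alt:
  fixes b :: "nat \<Rightarrow> bool"
  assumes "\<forall>i. i < m \<longrightarrow> b i \<noteq> b (Suc i)"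
  shows "j \<le> m \<Longrightarrow> (b j = b 0 \<longleftrightarrow> even j)"
proof (induction j)
  case 0 then show ?case by simp
next
  case (Suc j)
  then have ne: "b j \<noteq> b (Suc j)" using assms by simp
  have IH: "(b j = b 0) = even j" using Suc by simp
  show ?case using ne IH by (cases "b (Suc j)"; cases "b j"; cases "b 0") auto
qed

lemma P_elem:
  assumes "(x, y) \<in> P_xy V E"
  obtains lam where "\<forall>S. co_2_plex V E S \<longrightarrow> lam S \<ge> 0"
    "(\<Sum>S\<in>{S. co_2_plex V E S}. lam S) = 1"
    "\<And>v. x v = (\<Sum>S\<in>{S. co_2_plex V E S}. lam S * indicator S v)"
    "\<And>e. y e = (\<Sum>S\<in>{S. co_2_plex V E S}. lam S * indicator (edges_in E S) e)"
  using assms unfolding P_xy_def by auto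

lemma exists_pos:
  fixes lam :: "'b \<Rightarrow> real"
  assumes "finite C" "sum lam C = 1" "\<forall>S\<in>C. lam S \<ge> 0"
  shows "\<exists>S\<in>C. lam S > 0"
proof (rule ccontr)
  assume "\<not> ?thesis"
  then have "\<forall>S\<in>C. lam S = 0" using assms(3) by force
  then have "sum lam C = 0" by simp
  then show False using assms(2) by simp
qed

lemma tri:
  fixes i j l k :: nat
  assumes "4 \<le> k" "i < k" "j < k" "l < k" "i \<noteq> j" "i \<noteq> l" "j \<noteq> l"
   "j = Suc i \<or> i = Suc j \<or> (i = k - 1 \<and> j = 0) \<or> (j = k - 1 \<and> i = 0)"
   "l = Suc i \<or> i = Suc l \<or> (i = k - 1 \<and> l = 0) \<or> (l = k - 1 \<and> i = 0)"
   "l = Suc j \<or> j = Suc l \<or> (j = k - 1 \<and> l = 0) \<or> (l = k - 1 \<and> j = 0)"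
  shows False
  using assms by (elim disjE conjE; linarith)


lemma tight1:
  fixes lam g :: "'b \<Rightarrow> real"
  assumes fin: "finite C" and l1: "sum lam C = 1" and l0: "\<forall>S\<in>C. lam S \<ge> 0"
    and g1: "(\<Sum>S\<in>C. lam S * g S) = 1" and gle: "\<forall>S\<in>C. lam S > 0 \<longrightarrow> g S \<le> 1"
    and S: "S \<in> C" "lam S > 0"
  shows "g S = 1"
proof -
  let ?h = "\<lambda>S. lam S * (1 - g S)"
  have hnn: "\<forall>S\<in>C. 0 \<le> ?h S"
  proof
    fix S assume S: "S \<in> C"
    show "0 \<le> ?h S"
    proof (cases "lam S > 0")
      case True then show ?thesis using gle S by simp
    next
      case False then have "lam S = 0" using l0 S by force
      then show ?thesis by simp
    qed
  qed
  have "sum ?h C = sum lam C - (\<Sum>S\<in>C. lam S * g S)"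
    by (simp add: right_diff_distrib sum_subtractf)
  also have "\<dots> = 0" using l1 g1 by simp
  finally have "?h S = 0" using tight0[OF fin hnn] S by blast
  then show ?thesis using S by simp
qed

context
  fixes V :: "'a set" and E :: "'a set set" and f :: "nat \<Rightarrow> 'a" and k :: nat
  assumes sg: "simple_graph V E" and k4: "4 \<le> k" and inj: "inj_on f {..<k}"
    and fV: "f ` {..<k} \<subseteq> V"
    and adj: "\<forall>i<k. \<forall>j<k. {f i, f j} \<in> E \<longleftrightarrow> (j = Suc i mod k \<or> i = Suc j mod k)"
begin

lemma adj_iff: "i < k \<Longrightarrow> j < k \<Longrightarrow> {f i, f j} \<in> E \<longleftrightarrow>
   (j = Suc i \<or> i = Suc j \<or> (i = k - 1 \<and> j = 0) \<or> (j = k - 1 \<and> i = 0))"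
  using adj smod[of i k] smod[of j k] k4 by auto

lemma finj: "i < k \<Longrightarrow> j < k \<Longrightarrow> f i = f j \<longleftrightarrow> i = j"
  using inj by (auto dest: inj_onD)

lemma clique_idx:
  assumes "clique V E K" "i < k" "j < k" "f i \<in> K" "f j \<in> K" "i \<noteq> j"
  shows "j = Suc i \<or> i = Suc j \<or> (i = k - 1 \<and> j = 0) \<or> (j = k - 1 \<and> i = 0)"
proof -
  have "f i \<noteq> f j" using finj assms by simp
  then have "{f i, f j} \<in> E" using assms by (auto simp: clique_def)
  then show ?thesis using adj_iff assms by simp
qed

lemma clique_H2:
  assumes K: "clique V E K"
  shows "\<exists>u w. K \<inter> f ` {..<k} \<subseteq> {u, w}"
proof (cases "\<exists>u. K \<inter> f ` {..<k} \<subseteq> {u}")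
  case True
  then obtain u where "K \<inter> f ` {..<k} \<subseteq> {u}" by (elim exE)
  then have "K \<inter> f ` {..<k} \<subseteq> {u, u}" by simp
  then show ?thesis by (intro exI)
next
  case False
  have ne: "K \<inter> f ` {..<k} \<noteq> {}" using False by auto
  then obtain u where u: "u \<in> K \<inter> f ` {..<k}" by auto
  have "\<not> K \<inter> f ` {..<k} \<subseteq> {u}" using False by auto
  then obtain w where w: "w \<in> K \<inter> f ` {..<k}" "w \<noteq> u" by auto
  have "K \<inter> f ` {..<k} \<subseteq> {u, w}"
  proof
    fix z assume z: "z \<in> K \<inter> f ` {..<k}"
    show "z \<in> {u, w}"
    proof (rule ccontr)
      assume zz: "z \<notin> {u, w}"
      obtain i where i: "i < k" "u = f i" using u by auto
      obtain j where j: "j < k" "w = f j" using w by auto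
      obtain l where l: "l < k" "z = f l" using z by auto
      have ij: "i \<noteq> j" using i j w by auto
      have il: "i \<noteq> l" using i l zz by auto
      have jl: "j \<noteq> l" using j l zz by auto
      have A1: "j = Suc i \<or> i = Suc j \<or> (i = k - 1 \<and> j = 0) \<or> (j = k - 1 \<and> i = 0)"
        using clique_idx[OF K i(1) j(1)] i j u w ij by auto
      have A2: "l = Suc i \<or> i = Suc l \<or> (i = k - 1 \<and> l = 0) \<or> (l = k - 1 \<and> i = 0)"
        using clique_idx[OF K i(1) l(1)] i l u z il by auto
      have A3: "l = Suc j \<or> j = Suc l \<or> (j = k - 1 \<and> l = 0) \<or> (l = k - 1 \<and> j = 0)"
        using clique_idx[OF K j(1) l(1)] j l w z jl by auto
      show False using tri[OF k4 i(1) j(1) l(1) ij il jl A1 A2 A3] .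
    qed
  qed
  then show ?thesis by (intro exI)
qed

lemma clique_card_H:
  assumes K: "clique V E K"
  shows "card (K \<inter> f ` {..<k}) \<le> 2"
proof -
  obtain u w where uw: "K \<inter> f ` {..<k} \<subseteq> {u, w}" using clique_H2[OF K] by blast
  have "card (K \<inter> f ` {..<k}) \<le> card {u, w}" using uw by (simp add: card_mono)
  also have "\<dots> \<le> 2" by (simp add: card_insert_le_m1)
  finally show ?thesis .
qed

lemma finK: "clique V E K \<Longrightarrow> finite K"
  using sg_finite[OF sg] by (auto simp: clique_def intro: finite_subset)

lemma hole_edge: "i < k \<Longrightarrow> {f i, f (Suc i mod k)} \<in> E"
  using adj by (simp add: mod_less_divisor[of k] k4)

definition xo :: "'a \<Rightarrow> real" where "xo v = (if v \<in> f ` {..<k} then 1/2 else 0)"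

lemma odd_in_Q: "(xo, (\<lambda>e. 0)) \<in> clique_polyhedron V E"
proof -
  have x0: "\<forall>v. v \<notin> V \<longrightarrow> xo v = 0" using fV by (auto simp: xo_def)
  have xnn: "\<forall>v. xo v \<ge> 0" by (simp add: xo_def)
  have cl: "\<forall>K. maximal_clique V E K \<longrightarrow> (\<Sum>v\<in>K. xo v) \<le> 1"
  proof (intro allI impI)
    fix K assume "maximal_clique V E K"
    then have K: "clique V E K" by (simp add: maximal_clique_def)
    have "(\<Sum>v\<in>K. xo v) = (\<Sum>v\<in>K \<inter> f ` {..<k}. 1/2)"
      unfolding xo_def using finK[OF K] by (simp add: sum.inter_restrict[symmetric])
    also have "\<dots> = real (card (K \<inter> f ` {..<k})) / 2" by simp
    also have "\<dots> \<le> 1" using clique_card_H[OF K] by simp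
    finally show "(\<Sum>v\<in>K. xo v) \<le> 1" .
  qed
  show ?thesis unfolding clique_polyhedron_def using x0 xnn cl by auto
qed

lemma odd_not_in_P:
  assumes odd: "odd k"
  shows "(xo, (\<lambda>e. 0)) \<notin> P_xy V E"
proof
  assume inP: "(xo, (\<lambda>e. 0)) \<in> P_xy V E"
  obtain lam where lam0: "\<forall>S. co_2_plex V E S \<longrightarrow> lam S \<ge> 0"
    and lam1: "(\<Sum>S\<in>{S. co_2_plex V E S}. lam S) = 1"
    and xd: "\<And>v. xo v = (\<Sum>S\<in>{S. co_2_plex V E S}. lam S * indicator S v)"
    and yd: "\<And>e. (0::real) = (\<Sum>S\<in>{S. co_2_plex V E S}. lam S * indicator (edges_in E S) e)"
    using P_elem[OF inP] by blast
  let ?C = "{S. co_2_plex V E S}"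
  have finC: "finite ?C" by (rule fin_CP[OF sg])
  obtain S0 where S0: "S0 \<in> ?C" "lam S0 > 0" using exists_pos[OF finC lam1] lam0 by auto
  have notboth: "\<not> (f i \<in> S \<and> f (Suc i mod k) \<in> S)" if "i < k" "S \<in> ?C" "lam S > 0" for i S
  proof
    assume both: "f i \<in> S \<and> f (Suc i mod k) \<in> S"
    have hnn: "\<forall>S\<in>?C. 0 \<le> lam S * indicator (edges_in E S) {f i, f (Suc i mod k)}"
      using lam0 by simp
    have "lam S * indicator (edges_in E S) {f i, f (Suc i mod k)} = 0"
      using tight0[OF finC hnn yd[of "{f i, f (Suc i mod k)}", symmetric] that(2)] .
    moreover have "{f i, f (Suc i mod k)} \<in> edges_in E S"
      using both hole_edge[OF that(1)] by (auto simp: edges_in_def)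
    ultimately show False using that by simp
  qed
  have one: "f i \<in> S0 \<longleftrightarrow> f (Suc i mod k) \<notin> S0" if i: "i < k" for i
  proof -
    let ?u = "f i" and ?w = "f (Suc i mod k)"
    have Si: "Suc i mod k < k" using k4 by simp
    have xu: "xo ?u = 1/2" "xo ?w = 1/2" using i Si by (auto simp: xo_def)
    let ?h = "\<lambda>S. lam S * (1 - indicator S ?u - indicator S ?w)"
    have hnn: "\<forall>S\<in>?C. 0 \<le> ?h S"
    proof
      fix S assume S: "S \<in> ?C"
      show "0 \<le> ?h S"
      proof (cases "lam S > 0")
        case True
        then show ?thesis using notboth[OF i S True] by (auto simp: indicator_def)
      next
        case False
        then have "lam S = 0" using lam0 S by force
        then show ?thesis by simp
      qed
    qed
    have "sum ?h ?C = (\<Sum>S\<in>?C. lam S) - (\<Sum>S\<in>?C. lam S * indicator S ?u) - (\<Sum>S\<in>?C. lam S * indicator S ?w)"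
      by (simp add: right_diff_distrib sum_subtractf)
    also have "\<dots> = 0" using lam1 xd[of ?u] xd[of ?w] xu by simp
    finally have "?h S0 = 0" using tight0[OF finC hnn] S0 by blast
    then have "indicator S0 ?u + indicator S0 ?w = (1::real)" using S0 by simp
    then show ?thesis by (auto simp: indicator_def split: if_splits)
  qed
  let ?b = "\<lambda>i. f i \<in> S0"
  have "\<forall>i. i < k - 1 \<longrightarrow> ?b i \<noteq> ?b (Suc i)"
  proof (intro allI impI)
    fix i assume i: "i < k - 1"
    then have "Suc i mod k = Suc i" by simp
    then show "?b i \<noteq> ?b (Suc i)" using one[of i] i by simp
  qed
  then have "?b (k - 1) = ?b 0 \<longleftrightarrow> even (k - 1)" by (rule chain_alt) simp
  moreover have "even (k - 1)" using odd k4 by simp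
  moreover have "?b (k - 1) \<noteq> ?b 0" using one[of "k - 1"] k4 by simp
  ultimately show False by simp
qed

definition xe :: "'a \<Rightarrow> real" where
  "xe v = (if v = f 0 then 1 else if v \<in> f ` {..<k} then 1/2 else 0)"
definition ye :: "'a set \<Rightarrow> real" where
  "ye e = (if e = {f 0, f 1} \<or> e = {f 0, f (k - 1)} then 1/2 else 0)"


lemma even_basic:
  shows "f 0 \<noteq> f 1" "f 0 \<noteq> f (k - 1)" "f 1 \<noteq> f (k - 1)"
    "{f 0, f 1} \<in> E" "{f 0, f (k - 1)} \<in> E" "{f 0, f 1} \<noteq> {f 0, f (k - 1)}"
proof -
  show a: "f 0 \<noteq> f 1" using finj[of 0 1] k4 by simp
  show b: "f 0 \<noteq> f (k - 1)" using finj[of 0 "k - 1"] k4 by simp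
  show c: "f 1 \<noteq> f (k - 1)" using finj[of 1 "k - 1"] k4 by simp
  show "{f 0, f 1} \<in> E" using adj_iff[of 0 1] k4 by simp
  show "{f 0, f (k - 1)} \<in> E" using adj_iff[of 0 "k - 1"] k4 by simp
  show "{f 0, f 1} \<noteq> {f 0, f (k - 1)}" using a b c by (auto simp: doubleton_eq_iff)
qed

lemma xe_nn: "xe v \<ge> 0" by (simp add: xe_def)
lemma ye_nn: "ye e \<ge> 0" by (simp add: ye_def)

lemma sum_xe_H: "finite K \<Longrightarrow> (\<Sum>v\<in>K. xe v) = (\<Sum>v\<in>K \<inter> f ` {..<k}. xe v)"
proof -
  assume fK: "finite K"
  have f0H: "f 0 \<in> f ` {..<k}" using k4 by simp
  show ?thesis
    by (rule sum.mono_neutral_right[OF fK]) (use f0H in \<open>auto simp: xe_def\<close>)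
qed

lemma even_in_Q: "(xe, ye) \<in> clique_polyhedron V E"
proof -
  note eb = even_basic
  let ?H = "f ` {..<k}"
  let ?e1 = "{f 0, f 1}" and ?e2 = "{f 0, f (k - 1)}"
  have f0H: "f 0 \<in> ?H" "f 1 \<in> ?H" "f (k - 1) \<in> ?H" using k4 by auto
  have x0: "\<forall>v. v \<notin> V \<longrightarrow> xe v = 0" using fV f0H by (auto simp: xe_def)
  have y0: "\<forall>e. e \<notin> E \<longrightarrow> ye e = 0" using eb by (auto simp: ye_def)
  have finE: "finite E" by (rule sg_finite_E[OF sg])
  have deg: "\<forall>v\<in>V. (\<Sum>e\<in>delta E v. ye e) \<le> xe v"
  proof
    fix v assume "v \<in> V"
    have fd: "finite (delta E v)" using finE by (simp add: delta_def)
    have "(\<Sum>e\<in>delta E v. ye e) = (\<Sum>e\<in>delta E v. if e \<in> {?e1, ?e2} then 1/2 else 0)"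
      by (simp add: ye_def)
    also have "\<dots> = (\<Sum>e\<in>delta E v \<inter> {?e1, ?e2}. 1/2)"
      by (rule sum.inter_restrict[OF fd, symmetric])
    also have "\<dots> = real (card (delta E v \<inter> {?e1, ?e2})) / 2" by simp
    finally have eq: "(\<Sum>e\<in>delta E v. ye e) = real (card (delta E v \<inter> {?e1, ?e2})) / 2" .
    show "(\<Sum>e\<in>delta E v. ye e) \<le> xe v"
    proof (cases "v = f 0")
      case True
      have "card (delta E v \<inter> {?e1, ?e2}) \<le> card {?e1, ?e2}" by (rule card_mono) auto
      also have "\<dots> \<le> 2" by (simp add: card_insert_le_m1)
      finally show ?thesis using eq True by (simp add: xe_def)
    next
      case False
      note F = False
      show ?thesis
      proof (cases "v = f 1 \<or> v = f (k - 1)")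
        case True
        then have "delta E v \<inter> {?e1, ?e2} \<subseteq> {?e1} \<or> delta E v \<inter> {?e1, ?e2} \<subseteq> {?e2}"
          using eb F by (auto simp: delta_def)
        then have "card (delta E v \<inter> {?e1, ?e2}) \<le> 1"
          by (metis One_nat_def card.empty card.insert card_mono empty_iff finite.emptyI finite.insertI le_SucI order_refl)
        moreover have "xe v = 1/2" using True F f0H by (auto simp: xe_def)
        ultimately show ?thesis using eq by simp
      next
        case False
        then have "delta E v \<inter> {?e1, ?e2} = {}" using F by (auto simp: delta_def)
        then show ?thesis using eq xe_nn by simp
      qed
    qed
  qed
  have cl: "\<forall>K. maximal_clique V E K \<longrightarrow> (\<Sum>v\<in>K. xe v) - (\<Sum>e\<in>edges_in E K. ye e) \<le> 1"
  proof (intro allI impI)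
    fix K assume "maximal_clique V E K"
    then have K: "clique V E K" by (simp add: maximal_clique_def)
    have fK: "finite K" by (rule finK[OF K])
    have fEK: "finite (edges_in E K)" using finE by (simp add: edges_in_def)
    have ynn: "(\<Sum>e\<in>edges_in E K. ye e) \<ge> 0" by (simp add: sum_nonneg ye_nn)
    show "(\<Sum>v\<in>K. xe v) - (\<Sum>e\<in>edges_in E K. ye e) \<le> 1"
    proof (cases "f 0 \<in> K")
      case False
      have "(\<Sum>v\<in>K. xe v) = (\<Sum>v\<in>K \<inter> ?H. xe v)" by (rule sum_xe_H[OF fK])
      also have "\<dots> = (\<Sum>v\<in>K \<inter> ?H. 1/2)"
        using False by (intro sum.cong) (auto simp: xe_def)
      also have "\<dots> = real (card (K \<inter> ?H)) / 2" by simp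
      also have "\<dots> \<le> 1" using clique_card_H[OF K] by simp
      finally show ?thesis using ynn by simp
    next
      case True
      have sub: "K \<inter> ?H \<subseteq> {f 0, f 1, f (k - 1)}"
      proof
        fix z assume z: "z \<in> K \<inter> ?H"
        then obtain l where l: "l < k" "z = f l" by auto
        show "z \<in> {f 0, f 1, f (k - 1)}"
        proof (cases "l = 0")
          case True then show ?thesis using l by simp
        next
          case False
          have "l = Suc 0 \<or> 0 = Suc l \<or> (0 = k - 1 \<and> l = 0) \<or> (l = k - 1 \<and> 0 = 0)"
            using clique_idx[OF K _ l(1), of 0] True z l False k4 by auto
          then show ?thesis using l False by auto
        qed
      qed
      have notboth: "\<not> (f 1 \<in> K \<and> f (k - 1) \<in> K)"
      proof
        assume "f 1 \<in> K \<and> f (k - 1) \<in> K"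
        then have "k - 1 = Suc 1 \<or> 1 = Suc (k - 1) \<or> (1 = k - 1 \<and> k - 1 = 0) \<or> (k - 1 = k - 1 \<and> (1::nat) = 0)"
          using clique_idx[OF K, of 1 "k - 1"] k4 by auto
        then show False using k4 by auto
      qed
      have sx: "(\<Sum>v\<in>K. xe v) = (\<Sum>v\<in>K \<inter> ?H. xe v)" by (rule sum_xe_H[OF fK])
      show ?thesis
      proof (cases "f 1 \<in> K \<or> f (k - 1) \<in> K")
        case False
        then have "K \<inter> ?H = {f 0}" using sub True f0H by auto
        then have "(\<Sum>v\<in>K. xe v) = 1" using sx by (simp add: xe_def)
        then show ?thesis using ynn by simp
      next
        case True2: True
        then obtain w e where w: "K \<inter> ?H = {f 0, w}" "w \<noteq> f 0" "w \<in> ?H" "e = {f 0, w}" "ye e = 1/2"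
        proof (cases "f 1 \<in> K")
          case True
          then have "K \<inter> ?H = {f 0, f 1}" using sub notboth \<open>f 0 \<in> K\<close> f0H by auto
          then show ?thesis using that[of "f 1" ?e1] eb f0H by (auto simp: ye_def)
        next
          case False
          then have "K \<inter> ?H = {f 0, f (k - 1)}" using sub True2 \<open>f 0 \<in> K\<close> f0H by auto
          then show ?thesis using that[of "f (k - 1)" ?e2] eb f0H by (auto simp: ye_def)
        qed
        have "(\<Sum>v\<in>K. xe v) = xe (f 0) + xe w" using sx w by simp
        also have "\<dots> = 3/2" using w by (simp add: xe_def)
        finally have sxx: "(\<Sum>v\<in>K. xe v) = 3/2" .
        have "w \<in> K" "f 0 \<in> K" using w by auto
        then have "e \<in> edges_in E K" using w K by (auto simp: edges_in_def clique_def)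
        then have "ye e \<le> (\<Sum>e\<in>edges_in E K. ye e)"
          using fEK by (intro member_le_sum) (auto simp: ye_nn)
        then show ?thesis using sxx w by simp
      qed
    qed
  qed
  show ?thesis unfolding clique_polyhedron_def using x0 y0 deg cl ye_nn by auto
qed

lemma even_not_in_P:
  assumes ev: "even k"
  shows "(xe, ye) \<notin> P_xy V E"
proof
  assume inP: "(xe, ye) \<in> P_xy V E"
  obtain lam where lam0: "\<forall>S. co_2_plex V E S \<longrightarrow> lam S \<ge> 0"
    and lam1: "(\<Sum>S\<in>{S. co_2_plex V E S}. lam S) = 1"
    and xd: "\<And>v. xe v = (\<Sum>S\<in>{S. co_2_plex V E S}. lam S * indicator S v)"
    and yd: "\<And>e. ye e = (\<Sum>S\<in>{S. co_2_plex V E S}. lam S * indicator (edges_in E S) e)"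
    using P_elem[OF inP] by blast
  note eb = even_basic
  let ?C = "{S. co_2_plex V E S}"
  let ?e1 = "{f 0, f 1}" and ?e2 = "{f 0, f (k - 1)}"
  have finC: "finite ?C" by (rule fin_CP[OF sg])
  have l0: "\<forall>S\<in>?C. lam S \<ge> 0" using lam0 by simp
  obtain S0 where S0: "S0 \<in> ?C" "lam S0 > 0" using exists_pos[OF finC lam1] lam0 by auto
  have f0S: "f 0 \<in> S0"
  proof -
    have "indicator S0 (f 0) = (1::real)"
      using tight1[OF finC lam1 l0, of "\<lambda>S. indicator S (f 0)", OF _ _ S0]
        xd[of "f 0"] by (simp add: xe_def indicator_def)
    then show ?thesis by (simp add: indicator_def split: if_splits)
  qed
  have notboth: "\<not> (f i \<in> S \<and> f (Suc i) \<in> S)"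
    if i: "0 < i" "Suc i < k" and S: "S \<in> ?C" "lam S > 0" for i S
  proof
    assume both: "f i \<in> S \<and> f (Suc i) \<in> S"
    have ne: "f i \<noteq> f 0" "f (Suc i) \<noteq> f 0" using finj i by auto
    have y: "ye {f i, f (Suc i)} = 0" using ne by (auto simp: ye_def doubleton_eq_iff)
    have hnn: "\<forall>S\<in>?C. 0 \<le> lam S * indicator (edges_in E S) {f i, f (Suc i)}"
      using lam0 by simp
    have "lam S * indicator (edges_in E S) {f i, f (Suc i)} = 0"
      using tight0[OF finC hnn _ S(1)] yd[of "{f i, f (Suc i)}"] y by simp
    moreover have "{f i, f (Suc i)} \<in> E" using adj_iff[of i "Suc i"] i by simp
    then have "{f i, f (Suc i)} \<in> edges_in E S"
      using both by (auto simp: edges_in_def)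
    ultimately show False using S by simp
  qed
  have one: "f i \<in> S0 \<longleftrightarrow> f (Suc i) \<notin> S0" if i: "0 < i" "Suc i < k" for i
  proof -
    have ne: "f i \<noteq> f 0" "f (Suc i) \<noteq> f 0" using finj i by auto
    have xu: "xe (f i) = 1/2" "xe (f (Suc i)) = 1/2" using i ne by (auto simp: xe_def)
    have g1: "(\<Sum>S\<in>?C. lam S * (indicator S (f i) + indicator S (f (Suc i)))) = 1"
      using xd[of "f i"] xd[of "f (Suc i)"] xu by (simp add: distrib_left sum.distrib)
    have gle: "\<forall>S\<in>?C. lam S > 0 \<longrightarrow> indicator S (f i) + indicator S (f (Suc i)) \<le> (1::real)"
      using notboth[OF i] by (auto simp: indicator_def)
    have "indicator S0 (f i) + indicator S0 (f (Suc i)) = (1::real)"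
      using tight1[OF finC lam1 l0 g1 gle S0] .
    then show ?thesis by (auto simp: indicator_def split: if_splits)
  qed
  have hub: "(f 1 \<in> S0) \<noteq> (f (k - 1) \<in> S0)"
  proof -
    let ?g = "\<lambda>S. indicator (edges_in E S) ?e1 + indicator (edges_in E S) ?e2 :: real"
    have g1: "(\<Sum>S\<in>?C. lam S * ?g S) = 1"
      using yd[of ?e1] yd[of ?e2] eb by (simp add: distrib_left sum.distrib ye_def)
    have gle: "\<forall>S\<in>?C. lam S > 0 \<longrightarrow> ?g S \<le> 1"
    proof (intro ballI impI)
      fix S assume S: "S \<in> ?C"
      show "?g S \<le> 1"
      proof (rule ccontr)
        assume "\<not> ?g S \<le> 1"
        then have in12: "?e1 \<in> edges_in E S" "?e2 \<in> edges_in E S"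
          by (cases "?e1 \<in> edges_in E S"; cases "?e2 \<in> edges_in E S"; simp add: indicator_def)+
        then have mem: "f 0 \<in> S" "f 1 \<in> S" "f (k - 1) \<in> S" by (auto simp: edges_in_def)
        have "{f 1, f (k - 1)} \<subseteq> {t \<in> S. {t, f 0} \<in> E}"
          using mem eb by (auto simp: insert_commute)
        moreover have "finite {t \<in> S. {t, f 0} \<in> E}"
          using S sg_finite[OF sg] by (auto simp: co_2_plex_def intro: finite_subset)
        ultimately have "card {f 1, f (k - 1)} \<le> card {t \<in> S. {t, f 0} \<in> E}"
          by (simp add: card_mono)
        moreover have "card {t \<in> S. {t, f 0} \<in> E} \<le> 1" using S mem by (auto simp: co_2_plex_def)
        ultimately show False using eb by simp
      qed
    qed
    have "?g S0 = 1" using tight1[OF finC lam1 l0 g1 gle S0] .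
    then show ?thesis using f0S eb
      by (auto simp: indicator_def edges_in_def split: if_splits)
  qed
  let ?b = "\<lambda>i. f (Suc i) \<in> S0"
  have "\<forall>i. i < k - 2 \<longrightarrow> ?b i \<noteq> ?b (Suc i)"
  proof (intro allI impI)
    fix i assume i: "i < k - 2"
    show "?b i \<noteq> ?b (Suc i)" using one[of "Suc i"] i by simp
  qed
  then have "?b (k - 2) = ?b 0 \<longleftrightarrow> even (k - 2)" by (rule chain_alt) simp
  moreover have "even (k - 2)" using ev k4 by simp
  moreover have "Suc (k - 2) = k - 1" using k4 by simp
  ultimately show False using hub by simp
qed

end

lemma hole_neq:
  assumes sg: "simple_graph V E" and h: "has_hole V E"
  shows "P_xy V E \<noteq> clique_polyhedron V E"
proof -
  obtain k f where k4: "4 \<le> k" and inj: "inj_on f {..<k}" and fV: "f ` {..<k} \<subseteq> V"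
    and adj: "\<forall>i<k. \<forall>j<k. {f i, f j} \<in> E \<longleftrightarrow> (j = Suc i mod k \<or> i = Suc j mod k)"
    using h unfolding has_hole_def by blast
  show ?thesis
  proof (cases "even k")
    case True
    show ?thesis using even_in_Q[OF sg k4 inj fV adj] even_not_in_P[OF sg k4 inj fV adj True] by blast
  next
    case False
    show ?thesis using odd_in_Q[OF sg k4 inj fV adj] odd_not_in_P[OF sg k4 inj fV adj False] by blast
  qed
qed


definition walkC :: "'a set set \<Rightarrow> 'a set \<Rightarrow> 'a \<Rightarrow> 'a \<Rightarrow> (nat \<Rightarrow> 'a) \<Rightarrow> nat \<Rightarrow> bool" where
  "walkC E C s t p m \<longleftrightarrow> p 0 = s \<and> p m = t \<and> (\<forall>i<m. {p i, p (Suc i)} \<in> E) \<and> (\<forall>i. 0 < i \<and> i < m \<longrightarrow> p i \<in> C)"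

lemma shortcut_adj:
  assumes w: "walkC E C s t p m" and ij: "i + 1 < j" "j \<le> m" and e: "{p i, p j} \<in> E"
  shows "walkC E C s t (\<lambda>x. if x \<le> i then p x else p (x + (j - i - 1))) (m - (j - i - 1))"
proof -
  let ?d = "j - i - 1" and ?q = "\<lambda>x. if x \<le> i then p x else p (x + (j - i - 1))"
  have p0: "p 0 = s" and pm: "p m = t" and pe: "\<forall>x<m. {p x, p (Suc x)} \<in> E"
    and pin: "\<forall>x. 0 < x \<and> x < m \<longrightarrow> p x \<in> C" using w by (auto simp: walkC_def)
  have q0: "?q 0 = s" using p0 by simp
  have mi: "\<not> m - ?d \<le> i" using ij by simp
  have qm: "?q (m - ?d) = t" using mi ij pm by simp
  have qe: "\<forall>x < m - ?d. {?q x, ?q (Suc x)} \<in> E"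
  proof (intro allI impI)
    fix x assume x: "x < m - ?d"
    show "{?q x, ?q (Suc x)} \<in> E"
    proof (cases "x < i")
      case True
      then have "x < m" using ij by simp
      then show ?thesis using pe True by simp
    next
      case False
      show ?thesis
      proof (cases "x = i")
        case True
        have "Suc i + ?d = j" using ij by simp
        then show ?thesis using True e by simp
      next
        case F2: False
        then have xi: "i < x" using False by simp
        have "x + ?d < m" using x ij by simp
        then have "{p (x + ?d), p (Suc (x + ?d))} \<in> E" using pe by simp
        then show ?thesis using xi by simp
      qed
    qed
  qed
  have qin: "\<forall>x. 0 < x \<and> x < m - ?d \<longrightarrow> ?q x \<in> C"
  proof (intro allI impI)
    fix x assume x: "0 < x \<and> x < m - ?d"
    show "?q x \<in> C"
    proof (cases "x \<le> i")
      case True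
      then have "x < m" using ij by simp
      then show ?thesis using pin True x by simp
    next
      case False
      have "0 < x + ?d" "x + ?d < m" using x ij by auto
      then show ?thesis using pin False by simp
    qed
  qed
  show ?thesis unfolding walkC_def using q0 qm qe qin by blast
qed

lemma shortcut_eq:
  assumes w: "walkC E C s t p m" and ij: "i < j" "j \<le> m" and e: "p i = p j"
  shows "walkC E C s t (\<lambda>x. if x \<le> i then p x else p (x + (j - i))) (m - (j - i))"
proof -
  let ?d = "j - i" and ?q = "\<lambda>x. if x \<le> i then p x else p (x + (j - i))"
  have p0: "p 0 = s" and pm: "p m = t" and pe: "\<forall>x<m. {p x, p (Suc x)} \<in> E"
    and pin: "\<forall>x. 0 < x \<and> x < m \<longrightarrow> p x \<in> C" using w by (auto simp: walkC_def)
  have q0: "?q 0 = s" using p0 by simp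
  have qm: "?q (m - ?d) = t"
  proof (cases "m - ?d \<le> i")
    case True
    then have "m - ?d = i" using ij by simp
    then have "?q (m - ?d) = p j" using e by simp
    moreover have "j = m" using True ij by simp
    ultimately show ?thesis using pm by simp
  next
    case False
    then show ?thesis using ij pm by simp
  qed
  have qe: "\<forall>x < m - ?d. {?q x, ?q (Suc x)} \<in> E"
  proof (intro allI impI)
    fix x assume x: "x < m - ?d"
    show "{?q x, ?q (Suc x)} \<in> E"
    proof (cases "x < i")
      case True
      then have "x < m" using ij by simp
      then show ?thesis using pe True by simp
    next
      case False
      show ?thesis
      proof (cases "x = i")
        case True
        have "j < m" using x True ij by simp
        then have "{p j, p (Suc j)} \<in> E" using pe by simp
        moreover have "Suc i + ?d = Suc j" using ij by simp
        ultimately show ?thesis using True e by simp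
      next
        case F2: False
        then have xi: "i < x" using False by simp
        have "x + ?d < m" using x ij by simp
        then have "{p (x + ?d), p (Suc (x + ?d))} \<in> E" using pe by simp
        then show ?thesis using xi by simp
      qed
    qed
  qed
  have qin: "\<forall>x. 0 < x \<and> x < m - ?d \<longrightarrow> ?q x \<in> C"
  proof (intro allI impI)
    fix x assume x: "0 < x \<and> x < m - ?d"
    show "?q x \<in> C"
    proof (cases "x \<le> i")
      case True
      then have "x < m" using ij by simp
      then show ?thesis using pin True x by simp
    next
      case False
      have "0 < x + ?d" "x + ?d < m" using x ij by auto
      then show ?thesis using pin False by simp
    qed
  qed
  show ?thesis unfolding walkC_def using q0 qm qe qin by blast
qed

lemma min_walk:
  assumes "walkC E C s t p0 m0"
  obtains p m where "walkC E C s t p m" "\<And>p' m'. walkC E C s t p' m' \<Longrightarrow> m \<le> m'"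
proof -
  have "\<exists>x. (\<lambda>(p, m). walkC E C s t p m) x \<and> (\<forall>y. (\<lambda>(p, m). walkC E C s t p m) y \<longrightarrow> snd x \<le> snd y)"
    by (rule ex_has_least_nat[of "\<lambda>(p, m). walkC E C s t p m" "(p0, m0)" snd]) (use assms in simp)
  then obtain p m where "walkC E C s t p m" "\<forall>p' m'. walkC E C s t p' m' \<longrightarrow> m \<le> m'"
    by auto
  then show ?thesis using that by blast
qed

lemma min_walk_props:
  assumes w: "walkC E C s t p m" and mn: "\<And>p' m'. walkC E C s t p' m' \<Longrightarrow> m \<le> m'"
  shows "\<And>i j. i < j \<Longrightarrow> j \<le> m \<Longrightarrow> p i \<noteq> p j"
    and "\<And>i j. i + 1 < j \<Longrightarrow> j \<le> m \<Longrightarrow> {p i, p j} \<notin> E"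
proof -
  fix i j assume ij: "i < j" "j \<le> m"
  show "p i \<noteq> p j"
  proof
    assume e: "p i = p j"
    have "m \<le> m - (j - i)" using mn[OF shortcut_eq[OF w ij e]] .
    then show False using ij by simp
  qed
next
  fix i j assume ij: "i + 1 < j" "j \<le> m"
  show "{p i, p j} \<notin> E"
  proof
    assume e: "{p i, p j} \<in> E"
    have "m \<le> m - (j - i - 1)" using mn[OF shortcut_adj[OF w ij e]] .
    then show False using ij by simp
  qed
qed

lemma hole_from_path:
  fixes p :: "nat \<Rightarrow> 'a"
  assumes sg: "simple_graph V E" and m2: "2 \<le> m"
    and pe: "\<forall>i<m. {p i, p (Suc i)} \<in> E"
    and dist: "\<And>i j. i < j \<Longrightarrow> j \<le> m \<Longrightarrow> p i \<noteq> p j"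
    and noch: "\<And>i j. i + 1 < j \<Longrightarrow> j \<le> m \<Longrightarrow> {p i, p j} \<notin> E"
    and aV: "a \<in> V" and pV: "\<And>i. i \<le> m \<Longrightarrow> p i \<in> V"
    and ap: "\<And>i. i \<le> m \<Longrightarrow> a \<noteq> p i"
    and a0: "{a, p 0} \<in> E" and am: "{a, p m} \<in> E"
    and ai: "\<And>i. 0 < i \<Longrightarrow> i < m \<Longrightarrow> {a, p i} \<notin> E"
  shows "has_hole V E"
proof -
  define k where "k = m + 2"
  define f where "f i = (if i \<le> m then p i else a)" for i
  have k4: "4 \<le> k" using m2 by (simp add: k_def)
  have inj: "inj_on f {..<k}"
  proof (rule inj_onI)
    fix i j assume i: "i \<in> {..<k}" and j: "j \<in> {..<k}" and fe: "f i = f j"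
    show "i = j"
    proof (rule ccontr)
      assume ne: "i \<noteq> j"
      show False
      proof (cases "i \<le> m")
        case True
        show False
        proof (cases "j \<le> m")
          case True
          then show False using \<open>i \<le> m\<close> ne fe dist[of i j] dist[of j i] by (auto simp: f_def) (metis linorder_neqE_nat)
        next
          case False
          then show False using \<open>i \<le> m\<close> fe ap[of i] by (auto simp: f_def)
        qed
      next
        case False
        show False
        proof (cases "j \<le> m")
          case True
          then show False using False fe ap[of j] by (auto simp: f_def)
        next
          case F2: False
          then show False using False ne i j by (simp add: k_def)
        qed
      qed
    qed
  qed
  have fV: "f ` {..<k} \<subseteq> V" using aV pV by (auto simp: f_def)
  have sm: "Suc i mod k = (if i = m + 1 then 0 else Suc i)" if "i < k" for i
    using that by (simp add: k_def mod_Suc)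
  have pp: "{p i, p j} \<in> E \<longleftrightarrow> (j = Suc i \<or> i = Suc j)" if "i \<le> m" "j \<le> m" for i j
  proof
    assume e: "{p i, p j} \<in> E"
    show "j = Suc i \<or> i = Suc j"
    proof (rule ccontr)
      assume nn: "\<not> (j = Suc i \<or> i = Suc j)"
      show False
      proof (cases "i = j")
        case True
        then show False using e sg_noloop[OF sg, of "p i"] by simp
      next
        case False
        then have "i + 1 < j \<or> j + 1 < i" using nn by auto
        then show False
        proof
          assume "i + 1 < j" then show False using noch[of i j] that e by simp
        next
          assume "j + 1 < i" then have "{p j, p i} \<notin> E" using noch[of j i] that by simp
          then show False using e by (simp add: insert_commute)
        qed
      qed
    qed
  next
    assume "j = Suc i \<or> i = Suc j"
    then show "{p i, p j} \<in> E"
    proof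
      assume "j = Suc i" then show ?thesis using pe that by simp
    next
      assume "i = Suc j" then have "{p j, p i} \<in> E" using pe that by simp
      then show ?thesis by (simp add: insert_commute)
    qed
  qed
  have apx: "{a, p j} \<in> E \<longleftrightarrow> (j = 0 \<or> j = m)" if "j \<le> m" for j
  proof
    assume "{a, p j} \<in> E"
    then show "j = 0 \<or> j = m" using ai[of j] that by (cases "j = 0 \<or> j = m") auto
  next
    assume "j = 0 \<or> j = m"
    then show "{a, p j} \<in> E" using a0 am by auto
  qed
  have adj: "\<forall>i<k. \<forall>j<k. {f i, f j} \<in> E \<longleftrightarrow> (j = Suc i mod k \<or> i = Suc j mod k)"
  proof (intro allI impI)
    fix i j assume i: "i < k" and j: "j < k"
    show "{f i, f j} \<in> E \<longleftrightarrow> (j = Suc i mod k \<or> i = Suc j mod k)"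
    proof (cases "i \<le> m")
      case True
      note iT = True
      show ?thesis
      proof (cases "j \<le> m")
        case True
        have "{f i, f j} = {p i, p j}" using iT True by (simp add: f_def)
        moreover have "Suc i mod k = Suc i" "Suc j mod k = Suc j" using iT True sm i j by auto
        ultimately show ?thesis using pp[OF iT True] by simp
      next
        case False
        then have jm: "j = m + 1" using j by (simp add: k_def)
        have "{f i, f j} = {a, p i}" using iT jm by (auto simp: f_def)
        moreover have "Suc i mod k = Suc i" using iT sm i by auto
        moreover have "Suc j mod k = 0" using jm sm j by auto
        ultimately show ?thesis using apx[OF iT] jm iT by auto
      qed
    next
      case False
      then have im: "i = m + 1" using i by (simp add: k_def)
      show ?thesis
      proof (cases "j \<le> m")
        case True
        have "{f i, f j} = {a, p j}" using True im by (auto simp: f_def)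
        moreover have "Suc j mod k = Suc j" using True sm j by auto
        moreover have "Suc i mod k = 0" using im sm i by auto
        ultimately show ?thesis using apx[OF True] im True by auto
      next
        case F2: False
        then have "j = m + 1" using j by (simp add: k_def)
        then have "{f i, f j} = {a}" using im by (simp add: f_def)
        moreover have "Suc i mod k = 0" using im sm i by auto
        ultimately show ?thesis using im \<open>j = m + 1\<close> sg_noloop[OF sg, of a] by simp
      qed
    qed
  qed
  show ?thesis unfolding has_hole_def using k4 inj fV adj by blast
qed


definition simplicial :: "'a set \<Rightarrow> 'a set set \<Rightarrow> 'a \<Rightarrow> bool" where
  "simplicial V E v \<longleftrightarrow> v \<in> V \<and> (\<forall>u w. {v, u} \<in> E \<longrightarrow> {v, w} \<in> E \<longrightarrow> u \<noteq> w \<longrightarrow> {u, w} \<in> E)"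

lemma sg_induced:
  assumes sg: "simple_graph V E" and W: "W \<subseteq> V" shows "simple_graph W (edges_in E W)"
  unfolding simple_graph_def
proof (intro conjI ballI)
  show "finite W" using sg W by (auto simp: simple_graph_def intro: finite_subset)
  fix e assume e: "e \<in> edges_in E W"
  then obtain a b where "a \<noteq> b" "e = {a, b}" using sg_edge[OF sg, of e] by (auto simp: edges_in_def)
  then show "\<exists>u v. u \<noteq> v \<and> u \<in> W \<and> v \<in> W \<and> e = {u, v}" using e by (auto simp: edges_in_def)
qed

lemma hole_induced:
  assumes h: "has_hole W (edges_in E W)" and W: "W \<subseteq> V"
  shows "has_hole V E"
proof -
  obtain k f where k4: "4 \<le> k" and inj: "inj_on f {..<k}" and fW: "f ` {..<k} \<subseteq> W"
    and adj: "\<forall>i<k. \<forall>j<k. {f i, f j} \<in> edges_in E W \<longleftrightarrow> (j = Suc i mod k \<or> i = Suc j mod k)"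
    using h unfolding has_hole_def by blast
  have adj': "\<forall>i<k. \<forall>j<k. {f i, f j} \<in> E \<longleftrightarrow> (j = Suc i mod k \<or> i = Suc j mod k)"
  proof (intro allI impI)
    fix i j assume i: "i < k" and j: "j < k"
    have "f i \<in> W" "f j \<in> W" using fW i j by auto
    then have "{f i, f j} \<in> edges_in E W \<longleftrightarrow> {f i, f j} \<in> E" by (auto simp: edges_in_def)
    then show "{f i, f j} \<in> E \<longleftrightarrow> (j = Suc i mod k \<or> i = Suc j mod k)" using adj i j by simp
  qed
  have "f ` {..<k} \<subseteq> V" using fW W by blast
  then show ?thesis unfolding has_hole_def using k4 inj adj' by blast
qed

lemma simplicial_far:
  "simple_graph V E \<Longrightarrow> \<not> has_hole V E \<Longrightarrow> a \<in> V \<Longrightarrow> (\<exists>b\<in>V. b \<noteq> a \<and> {a, b} \<notin> E)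
    \<Longrightarrow> \<exists>s\<in>V. s \<noteq> a \<and> {a, s} \<notin> E \<and> simplicial V E s"
proof (induction "card V" arbitrary: V E a rule: less_induct)
  case less
  note sg = less.prems(1) and nh = less.prems(2) and aV = less.prems(3) and ex = less.prems(4)
  define W where "W = {w \<in> V. w \<noteq> a \<and> {a, w} \<notin> E}"
  obtain c0 where c0W: "c0 \<in> W" using ex by (auto simp: W_def)
  define R where "R p q \<longleftrightarrow> {p, q} \<in> E \<and> p \<in> W \<and> q \<in> W" for p q
  define C where "C = {w. R\<^sup>*\<^sup>* c0 w}"
  have CW: "C \<subseteq> W"
  proof
    fix w assume "w \<in> C"
    then have "R\<^sup>*\<^sup>* c0 w" by (simp add: C_def)
    then show "w \<in> W"
    proof (induction rule: rtranclp_induct)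
      case base then show ?case using c0W .
    next
      case (step y z) then show ?case by (simp add: R_def)
    qed
  qed
  have WV: "W \<subseteq> V" by (auto simp: W_def)
  have c0C: "c0 \<in> C" by (simp add: C_def)
  have Cclos: "w \<in> C" if "c \<in> C" "w \<in> W" "{c, w} \<in> E" for c w
  proof -
    have "R c w" using that CW by (auto simp: R_def)
    then have "R\<^sup>*\<^sup>* c0 w" using that(1) by (simp add: C_def)
    then show ?thesis by (simp add: C_def)
  qed
  have Rsym: "R q p" if "R p q" for p q using that by (simp add: R_def insert_commute)
  have Crev: "R\<^sup>*\<^sup>* c c0" if "c \<in> C" for c
  proof -
    have "R\<^sup>*\<^sup>* c0 c" using that by (simp add: C_def)
    then show ?thesis
    proof (induction rule: rtranclp_induct)
      case base then show ?case by simp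
    next
      case (step y z)
      have "R z y" using step(2) by (rule Rsym)
      then show ?case using step(3) by (rule converse_rtranclp_into_rtranclp)
    qed
  qed
  have aNC: "{a, c} \<notin> E" if "c \<in> C" for c using that CW by (auto simp: W_def)
  have aC: "a \<notin> C" using CW by (auto simp: W_def)
  define S where "S = {s \<in> V - C. \<exists>c\<in>C. {s, c} \<in> E}"
  have SNa: "{a, s} \<in> E \<and> s \<noteq> a" if sS: "s \<in> S" for s
  proof -
    obtain c where c: "c \<in> C" "{s, c} \<in> E" and sV: "s \<in> V" and sC: "s \<notin> C"
      using sS unfolding S_def by blast
    have "s \<notin> W"
    proof
      assume "s \<in> W"
      moreover have "{c, s} \<in> E" using c by (simp add: insert_commute)
      ultimately have "s \<in> C" using Cclos c(1) by blast
      then show False using sC by simp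
    qed
    then have "s = a \<or> {a, s} \<in> E" using sV by (auto simp: W_def)
    moreover have "s \<noteq> a" using c aNC by blast
    ultimately show ?thesis by simp
  qed
  have CV: "C \<subseteq> V" using CW WV by blast
  have SV: "S \<subseteq> V" by (auto simp: S_def)
  have Sclique: "{s, t} \<in> E" if st: "s \<in> S" "t \<in> S" "s \<noteq> t" for s t
  proof (rule ccontr)
    assume nst: "{s, t} \<notin> E"
    obtain c1 where c1: "c1 \<in> C" "{s, c1} \<in> E" using st(1) by (auto simp: S_def)
    obtain c2 where c2: "c2 \<in> C" "{t, c2} \<in> E" using st(2) by (auto simp: S_def)
    have reach: "\<exists>p m. p 0 = s \<and> p m = d \<and> 1 \<le> m \<and> (\<forall>i<m. {p i, p (Suc i)} \<in> E) \<and> (\<forall>i. 0 < i \<and> i \<le> m \<longrightarrow> p i \<in> C)"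
      if "R\<^sup>*\<^sup>* c1 d" for d
      using that
    proof (induction rule: rtranclp_induct)
      case base
      let ?p = "\<lambda>i::nat. if i = 0 then s else c1"
      have "\<forall>i<1. {?p i, ?p (Suc i)} \<in> E" using c1 by simp
      moreover have "\<forall>i. 0 < i \<and> i \<le> 1 \<longrightarrow> ?p i \<in> C" using c1 by simp
      ultimately show ?case by (intro exI[of _ ?p] exI[of _ 1]) simp
    next
      case (step y z)
      obtain p m where pm: "p 0 = s" "p m = y" "1 \<le> m" "\<forall>i<m. {p i, p (Suc i)} \<in> E"
        "\<forall>i. 0 < i \<and> i \<le> m \<longrightarrow> p i \<in> C" using step(3) by blast
      have "R\<^sup>*\<^sup>* c0 c1" using c1 by (simp add: C_def)
      then have "R\<^sup>*\<^sup>* c0 y" using step(1) by (rule rtranclp_trans)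
      then have "R\<^sup>*\<^sup>* c0 z" using step(2) by (rule rtranclp.rtrancl_into_rtrancl)
      then have zC: "z \<in> C" by (simp add: C_def)
      have yz: "{y, z} \<in> E" using step(2) by (simp add: R_def)
      let ?q = "p(Suc m := z)"
      have "?q 0 = s" using pm by simp
      moreover have "?q (Suc m) = z" by simp
      moreover have "\<forall>i<Suc m. {?q i, ?q (Suc i)} \<in> E"
      proof (intro allI impI)
        fix i assume "i < Suc m"
        then show "{?q i, ?q (Suc i)} \<in> E"
          using pm yz by (cases "i = m") simp_all
      qed
      moreover have "\<forall>i. 0 < i \<and> i \<le> Suc m \<longrightarrow> ?q i \<in> C"
        using pm zC by (auto simp: le_Suc_eq)
      ultimately show ?case by (intro exI[of _ ?q] exI[of _ "Suc m"]) simp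
    qed
    have "R\<^sup>*\<^sup>* c0 c2" using c2(1) by (simp add: C_def)
    then have "R\<^sup>*\<^sup>* c1 c2" by (rule rtranclp_trans[OF Crev[OF c1(1)]])
    then have "\<exists>p m. p 0 = s \<and> p m = c2 \<and> 1 \<le> m \<and> (\<forall>i<m. {p i, p (Suc i)} \<in> E) \<and> (\<forall>i. 0 < i \<and> i \<le> m \<longrightarrow> p i \<in> C)"
      by (rule reach)
    then obtain p m where pm: "p 0 = s" "p m = c2" "1 \<le> m" "\<forall>i<m. {p i, p (Suc i)} \<in> E"
        "\<forall>i. 0 < i \<and> i \<le> m \<longrightarrow> p i \<in> C" by (elim exE conjE)
    let ?q = "p(Suc m := t)"
    have "walkC E C s t ?q (Suc m)" unfolding walkC_def
    proof (intro conjI allI impI)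
      show "?q 0 = s" using pm by simp
      show "?q (Suc m) = t" by simp
      fix i
      show "i < Suc m \<Longrightarrow> {?q i, ?q (Suc i)} \<in> E"
        using pm c2 by (cases "i = m") (simp_all add: insert_commute)
      show "0 < i \<and> i < Suc m \<Longrightarrow> ?q i \<in> C" using pm by simp
    qed
    then obtain p m where w: "walkC E C s t p m" and mn: "\<And>p' m'. walkC E C s t p' m' \<Longrightarrow> m \<le> m'"
      by (rule min_walk) blast
    have p0: "p 0 = s" and pmt: "p m = t" and pe: "\<forall>i<m. {p i, p (Suc i)} \<in> E"
      and pin: "\<forall>i. 0 < i \<and> i < m \<longrightarrow> p i \<in> C" using w by (auto simp: walkC_def)
    have m2: "2 \<le> m"
    proof (rule ccontr)
      assume "\<not> 2 \<le> m"
      then have "m = 0 \<or> m = 1" by auto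
      then show False
      proof
        assume "m = 0" then show False using p0 pmt st by simp
      next
        assume "m = 1" then have "{p 0, p 1} \<in> E" using pe by simp
        then show False using p0 pmt \<open>m = 1\<close> nst by simp
      qed
    qed
    have sVt: "s \<in> V" "t \<in> V" using st SV by auto
    have pV: "p i \<in> V" if "i \<le> m" for i
    proof (cases "i = 0")
      case True then show ?thesis using p0 sVt by simp
    next
      case False
      show ?thesis
      proof (cases "i = m")
        case True then show ?thesis using pmt sVt by simp
      next
        case F2: False
        then have "p i \<in> C" using pin False that by simp
        then show ?thesis using CV by blast
      qed
    qed
    have ap: "a \<noteq> p i" if "i \<le> m" for i
    proof (cases "i = 0")
      case True then show ?thesis using p0 SNa st by auto
    next
      case False
      show ?thesis
      proof (cases "i = m")
        case True then show ?thesis using pmt SNa st by auto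
      next
        case F2: False
        then have "p i \<in> C" using pin False that by simp
        then show ?thesis using aC by auto
      qed
    qed
    have "has_hole V E"
    proof (rule hole_from_path[OF sg m2 pe])
      show "\<And>i j. i < j \<Longrightarrow> j \<le> m \<Longrightarrow> p i \<noteq> p j" by (rule min_walk_props(1)[OF w mn])
      show "\<And>i j. i + 1 < j \<Longrightarrow> j \<le> m \<Longrightarrow> {p i, p j} \<notin> E" by (rule min_walk_props(2)[OF w mn])
      show "a \<in> V" by (rule aV)
      show "\<And>i. i \<le> m \<Longrightarrow> p i \<in> V" by (rule pV)
      show "\<And>i. i \<le> m \<Longrightarrow> a \<noteq> p i" by (rule ap)
      show "{a, p 0} \<in> E" using p0 SNa st by simp
      show "{a, p m} \<in> E" using pmt SNa st by simp
      show "\<And>i. 0 < i \<Longrightarrow> i < m \<Longrightarrow> {a, p i} \<notin> E" using pin aNC by simp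
    qed
    then show False using nh by simp
  qed
  define V' where "V' = C \<union> S"
  define E' where "E' = edges_in E V'"
  have V'V: "V' \<subseteq> V" using CV SV by (simp add: V'_def)
  have aV': "a \<notin> V'" using aC SNa sg_noloop[OF sg, of a] by (auto simp: V'_def)
  have finV: "finite V" by (rule sg_finite[OF sg])
  have card_lt: "card V' < card V"
    using V'V aV' aV finV by (metis psubsetI psubset_card_mono)
  have sg': "simple_graph V' E'" unfolding E'_def by (rule sg_induced[OF sg V'V])
  have nh': "\<not> has_hole V' E'" using hole_induced[OF _ V'V] nh by (auto simp: E'_def)
  have E'iff: "{p, q} \<in> E' \<longleftrightarrow> {p, q} \<in> E" if "p \<in> V'" "q \<in> V'" for p q
    using that by (auto simp: E'_def edges_in_def)
  have c0V': "c0 \<in> V'" using c0C by (simp add: V'_def)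
  obtain s where sC: "s \<in> C" and ssimp: "simplicial V' E' s"
  proof (cases "\<forall>p\<in>V'. \<forall>q\<in>V'. p \<noteq> q \<longrightarrow> {p, q} \<in> E")
    case True
    have "simplicial V' E' c0" unfolding simplicial_def
    proof (intro conjI allI impI)
      show "c0 \<in> V'" by (rule c0V')
      fix u w assume u: "{c0, u} \<in> E'" and w: "{c0, w} \<in> E'" and uw: "u \<noteq> w"
      have "u \<in> V'" "w \<in> V'" using u w by (auto simp: E'_def edges_in_def)
      then show "{u, w} \<in> E'" using True uw E'iff by blast
    qed
    then show ?thesis using that c0C by blast
  next
    case False
    obtain a' where a'V: "a' \<in> V'" and a'ex: "\<exists>b\<in>V'. b \<noteq> a' \<and> {a', b} \<notin> E'"
      and a'S: "\<forall>s\<in>S. s = a' \<or> {a', s} \<in> E'"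
    proof (cases "\<exists>s0\<in>S. \<exists>b\<in>V'. b \<noteq> s0 \<and> {s0, b} \<notin> E'")
      case True
      then obtain s0 where s0: "s0 \<in> S" "\<exists>b\<in>V'. b \<noteq> s0 \<and> {s0, b} \<notin> E'" by blast
      have "s0 \<in> V'" using s0 by (simp add: V'_def)
      moreover have "\<forall>s\<in>S. s = s0 \<or> {s0, s} \<in> E'"
      proof
        fix s assume sS: "s \<in> S"
        show "s = s0 \<or> {s0, s} \<in> E'"
        proof (cases "s = s0")
          case False
          then have "{s0, s} \<in> E" using Sclique s0(1) sS by blast
          moreover have "s0 \<in> V'" "s \<in> V'" using s0(1) sS by (auto simp: V'_def)
          ultimately show ?thesis using E'iff by blast
        qed simp
      qed
      ultimately show ?thesis using that s0(2) by blast
    next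
      case F2: False
      from False obtain p q where pq: "p \<in> V'" "q \<in> V'" "p \<noteq> q" "{p, q} \<notin> E" by blast
      have npq: "{p, q} \<notin> E'" using pq E'iff by blast
      have "q \<noteq> p \<and> {p, q} \<notin> E'" using npq pq(3) by simp
      then have "\<exists>b\<in>V'. b \<noteq> p \<and> {p, b} \<notin> E'" using pq(2) by (rule bexI)
      moreover have "\<forall>s\<in>S. s = p \<or> {p, s} \<in> E'"
      proof
        fix s assume sS: "s \<in> S"
        have "s \<in> V'" using sS by (simp add: V'_def)
        have "\<forall>b\<in>V'. b \<noteq> s \<longrightarrow> {s, b} \<in> E'" using F2 sS by blast
        then have "p = s \<or> {s, p} \<in> E'" using pq(1) by blast
        then show "s = p \<or> {p, s} \<in> E'" by (auto simp: insert_commute)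
      qed
      ultimately show ?thesis using that pq(1) by blast
    qed
    from less.hyps[OF card_lt sg' nh' a'V a'ex] obtain s where
      s: "s \<in> V'" "s \<noteq> a'" "{a', s} \<notin> E'" "simplicial V' E' s" by blast
    have "s \<notin> S" using s a'S by blast
    then have "s \<in> C" using s(1) by (simp add: V'_def)
    then show ?thesis using that s(4) by blast
  qed
  have sV: "s \<in> V" using sC CV by blast
  have nbr: "u \<in> V'" if "{s, u} \<in> E" for u
  proof -
    have uV: "u \<in> V" using sg_adj_in[OF sg that] by simp
    show ?thesis
    proof (cases "u \<in> C")
      case True then show ?thesis by (simp add: V'_def)
    next
      case False
      have "{u, s} \<in> E" using that by (simp add: insert_commute)
      then have "u \<in> S" using uV False sC by (auto simp: S_def)
      then show ?thesis by (simp add: V'_def)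
    qed
  qed
  have sV': "s \<in> V'" using sC by (simp add: V'_def)
  have "simplicial V E s" unfolding simplicial_def
  proof (intro conjI allI impI)
    show "s \<in> V" by (rule sV)
    fix u w assume u: "{s, u} \<in> E" and w: "{s, w} \<in> E" and uw: "u \<noteq> w"
    have uV': "u \<in> V'" and wV': "w \<in> V'" using nbr u w by auto
    have "{s, u} \<in> E'" "{s, w} \<in> E'" using u w E'iff sV' uV' wV' by auto
    then have "{u, w} \<in> E'" using ssimp uw by (auto simp: simplicial_def)
    then show "{u, w} \<in> E" by (simp add: E'_def edges_in_def)
  qed
  moreover have "s \<noteq> a" "{a, s} \<notin> E" using sC CW by (auto simp: W_def)
  ultimately show ?case using sV by blast
qed

lemma exists_simplicial:
  assumes sg: "simple_graph V E" and nh: "\<not> has_hole V E" and ne: "V \<noteq> {}"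
  shows "\<exists>v. simplicial V E v"
proof (cases "\<exists>p\<in>V. \<exists>q\<in>V. q \<noteq> p \<and> {p, q} \<notin> E")
  case True
  then obtain p where "p \<in> V" "\<exists>q\<in>V. q \<noteq> p \<and> {p, q} \<notin> E" by blast
  then show ?thesis using simplicial_far[OF sg nh] by blast
next
  case False
  obtain a where aV: "a \<in> V" using ne by blast
  have "simplicial V E a" unfolding simplicial_def
  proof (intro conjI allI impI)
    show "a \<in> V" by (rule aV)
    fix u w assume u: "{a, u} \<in> E" and w: "{a, w} \<in> E" and uw: "u \<noteq> w"
    have "u \<in> V" "w \<in> V" using sg_adj_in[OF sg u] sg_adj_in[OF sg w] by auto
    then show "{u, w} \<in> E" using False uw by auto
  qed
  then show ?thesis by blast
qed


lemma edges_in_mono_adj: "u \<in> W \<Longrightarrow> w \<in> W \<Longrightarrow> {u, w} \<in> edges_in E W \<longleftrightarrow> {u, w} \<in> E"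
  by (auto simp: edges_in_def)

lemma co2_induced_iff:
  assumes "S \<subseteq> W" "W \<subseteq> V"
  shows "co_2_plex W (edges_in E W) S \<longleftrightarrow> co_2_plex V E S"
proof -
  have "\<And>w. w \<in> S \<Longrightarrow> {u \<in> S. {u, w} \<in> edges_in E W} = {u \<in> S. {u, w} \<in> E}"
    using assms by (auto simp: edges_in_def)
  then show ?thesis using assms unfolding co_2_plex_def by auto
qed

lemma edges_in_induced: "S \<subseteq> W \<Longrightarrow> edges_in (edges_in E W) S = edges_in E S"
  by (auto simp: edges_in_def)

lemma co2_subset:
  assumes sg: "simple_graph V E" and S: "co_2_plex V E S" and T: "T \<subseteq> S"
  shows "co_2_plex V E T"
  unfolding co_2_plex_def
proof (intro conjI ballI)
  show "T \<subseteq> V" using S T by (auto simp: co_2_plex_def)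
  fix w assume w: "w \<in> T"
  have fin: "finite {u \<in> S. {u, w} \<in> E}"
    using S sg_finite[OF sg] by (auto simp: co_2_plex_def intro: finite_subset)
  have "card {u \<in> T. {u, w} \<in> E} \<le> card {u \<in> S. {u, w} \<in> E}"
    using T by (intro card_mono[OF fin]) auto
  also have "\<dots> \<le> 1" using S w T by (auto simp: co_2_plex_def)
  finally show "card {u \<in> T. {u, w} \<in> E} \<le> 1" .
qed

lemma clique_co2_cases:
  assumes sg: "simple_graph V E" and S: "co_2_plex V E S" and K: "clique V E K"
  shows "K \<inter> S = {} \<or> (\<exists>u. K \<inter> S = {u}) \<or> (\<exists>u w. u \<noteq> w \<and> K \<inter> S = {u, w})"
proof (cases "K \<inter> S = {}")
  case False
  then obtain u where u: "u \<in> K \<inter> S" by auto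
  show ?thesis
  proof (cases "K \<inter> S = {u}")
    case False
    then obtain w where w: "w \<in> K \<inter> S" "w \<noteq> u" using u by auto
    have "K \<inter> S = {u, w}"
    proof (rule ccontr)
      assume "K \<inter> S \<noteq> {u, w}"
      then obtain z where z: "z \<in> K \<inter> S" "z \<noteq> u" "z \<noteq> w" using u w by blast
      have E1: "{w, u} \<in> E" "{z, u} \<in> E" using K z u w by (auto simp: clique_def)
      have "{w, z} \<subseteq> {t \<in> S. {t, u} \<in> E}" using w z E1 by auto
      moreover have "finite {t \<in> S. {t, u} \<in> E}"
        using S sg_finite[OF sg] by (auto simp: co_2_plex_def intro: finite_subset)
      ultimately have "card {w, z} \<le> card {t \<in> S. {t, u} \<in> E}" by (simp add: card_mono)
      moreover have "card {t \<in> S. {t, u} \<in> E} \<le> 1" using S u by (auto simp: co_2_plex_def)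
      ultimately show False using z by simp
    qed
    then have "\<exists>u w. u \<noteq> w \<and> K \<inter> S = {u, w}" using w by (intro exI[of _ u] exI[of _ w]) simp
    then show ?thesis by (intro disjI2)
  qed simp
qed simp

lemma clique_co2_count:
  assumes sg: "simple_graph V E" and S: "co_2_plex V E S" and K: "clique V E K" and ne: "K \<inter> S \<noteq> {}"
  shows "real (card (K \<inter> S)) - real (card (edges_in E K \<inter> edges_in E S)) \<ge> 1"
proof -
  have finE: "finite E" by (rule sg_finite_E[OF sg])
  have sub: "edges_in E K \<inter> edges_in E S \<subseteq> {e \<in> E. e \<subseteq> K \<inter> S}" by (auto simp: edges_in_def)
  have fin2: "finite {e \<in> E. e \<subseteq> K \<inter> S}" using finE by simp
  from clique_co2_cases[OF sg S K] ne consider (one) u where "K \<inter> S = {u}"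
    | (two) u w where "u \<noteq> w" "K \<inter> S = {u, w}" by (elim disjE exE conjE) auto
  then show ?thesis
  proof cases
    case one
    have "{e \<in> E. e \<subseteq> K \<inter> S} = {}"
    proof -
      have "e \<in> E \<Longrightarrow> e \<subseteq> {u} \<Longrightarrow> False" for e
        using sg_edge[OF sg, of e] by auto
      then show ?thesis using one by auto
    qed
    then have "edges_in E K \<inter> edges_in E S = {}" using sub by blast
    then show ?thesis using one by simp
  next
    case two
    have "{e \<in> E. e \<subseteq> K \<inter> S} \<subseteq> {{u, w}}"
    proof
      fix e assume e: "e \<in> {e \<in> E. e \<subseteq> K \<inter> S}"
      then obtain a b where ab: "a \<noteq> b" "e = {a, b}" using sg_edge[OF sg, of e] by auto
      then show "e \<in> {{u, w}}" using e two by auto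
    qed
    then have "card (edges_in E K \<inter> edges_in E S) \<le> card {{u, w}}"
      using sub by (intro card_mono) auto
    then show ?thesis using two by simp
  qed
qed

context
  fixes V :: "'a set" and E :: "'a set set" and v :: 'a
  assumes sg: "simple_graph V E" and sv: "simplicial V E v"
begin

lemma vV: "v \<in> V" using sv by (simp add: simplicial_def)

lemma N_sub: assumes "{v, u} \<in> E" shows "u \<in> V - {v}"
proof -
  have "u \<in> V" using sg_adj_in[OF sg assms] by simp
  moreover have "u \<noteq> v" using assms sg_noloop[OF sg, of v] by auto
  ultimately show ?thesis by simp
qed

lemma N_clique: "{v, u} \<in> E \<Longrightarrow> {v, w} \<in> E \<Longrightarrow> u \<noteq> w \<Longrightarrow> {u, w} \<in> E"
  using sv by (simp add: simplicial_def)

lemma Kv_max: "maximal_clique V E (insert v {u. {v, u} \<in> E})"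
proof -
  let ?K = "insert v {u. {v, u} \<in> E}"
  have sub: "?K \<subseteq> V" using vV N_sub by auto
  have pairs: "{a, b} \<in> E" if "a \<in> ?K" "b \<in> ?K" "a \<noteq> b" for a b
  proof (cases "a = v")
    case True
    then have "b \<noteq> v" "b \<in> ?K" using that by auto
    then have "{v, b} \<in> E" by simp
    then show ?thesis using True by simp
  next
    case False
    note aF = False
    show ?thesis
    proof (cases "b = v")
      case True
      then have "{v, a} \<in> E" using that aF by auto
      then show ?thesis using True by (simp add: insert_commute)
    next
      case False
      have "{v, a} \<in> E" using that(1) aF by simp
      moreover have "{v, b} \<in> E" using that(2) False by simp
      ultimately show ?thesis using that(3) by (rule N_clique)
    qed
  qed
  have cl: "clique V E ?K" unfolding clique_def
    by (intro conjI sub ballI impI pairs)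
  have "K' = ?K" if K': "clique V E K'" "?K \<subseteq> K'" for K'
  proof
    show "K' \<subseteq> ?K"
    proof
      fix z assume z: "z \<in> K'"
      show "z \<in> ?K"
      proof (cases "z = v")
        case False
        have "v \<in> K'" using K' by auto
        then have "{z, v} \<in> E" using K' z False by (auto simp: clique_def)
        then show ?thesis by (simp add: insert_commute)
      qed simp
    qed
  qed (rule that(2))
  then show ?thesis using cl unfolding maximal_clique_def by blast
qed

lemma G'_sg: "simple_graph (V - {v}) (edges_in E (V - {v}))"
  by (rule sg_induced[OF sg]) auto

lemma delta_v: "delta E v = (\<lambda>u. {v, u}) ` {u. {v, u} \<in> E}"
proof
  show "delta E v \<subseteq> (\<lambda>u. {v, u}) ` {u. {v, u} \<in> E}"
  proof
    fix e assume e: "e \<in> delta E v"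
    have "e \<in> E" using e by (simp add: delta_def)
    then obtain a b where ab: "a \<noteq> b" "e = {a, b}" using sg_edge[OF sg, of e] by auto
    show "e \<in> (\<lambda>u. {v, u}) ` {u. {v, u} \<in> E}"
    proof (cases "a = v")
      case True then show ?thesis using e ab by (auto simp: delta_def)
    next
      case False then have "b = v" using e ab by (auto simp: delta_def)
      then show ?thesis using e ab by (auto simp: delta_def insert_commute intro!: image_eqI[where x=a])
    qed
  qed
qed (auto simp: delta_def)

lemma sum_delta_v: "(\<Sum>e\<in>delta E v. g e) = (\<Sum>u\<in>{u. {v, u} \<in> E}. g {v, u})"
proof -
  have "inj_on (\<lambda>u. {v, u}) {u. {v, u} \<in> E}" by (auto simp: inj_on_def doubleton_eq_iff)
  then show ?thesis unfolding delta_v by (simp add: sum.reindex)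
qed

lemma Kv_ineq:
  assumes Q: "(x, y) \<in> clique_polyhedron V E"
  shows "(\<Sum>w\<in>{u. {v, u} \<in> E}. x w) - (\<Sum>e\<in>edges_in E {u. {v, u} \<in> E}. y e)
           \<le> 1 - (x v - (\<Sum>e\<in>delta E v. y e))"
proof -
  let ?N = "{u. {v, u} \<in> E}"
  have cl: "\<forall>K. maximal_clique V E K \<longrightarrow> (\<Sum>w\<in>K. x w) - (\<Sum>e\<in>edges_in E K. y e) \<le> 1"
    using Q by (auto simp: clique_polyhedron_def)
  have finE: "finite E" by (rule sg_finite_E[OF sg])
  have finV: "finite V" by (rule sg_finite[OF sg])
  have "?N \<subseteq> V" using N_sub by blast
  then have finN: "finite ?N" using finV by (rule finite_subset)
  have vN: "v \<notin> ?N" using sg_noloop[OF sg, of v] by simp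
  have "edges_in E (insert v ?N) = edges_in E ?N \<union> delta E v"
  proof
    show "edges_in E (insert v ?N) \<subseteq> edges_in E ?N \<union> delta E v"
      by (auto simp: edges_in_def delta_def)
    show "edges_in E ?N \<union> delta E v \<subseteq> edges_in E (insert v ?N)"
    proof
      fix e assume e: "e \<in> edges_in E ?N \<union> delta E v"
      show "e \<in> edges_in E (insert v ?N)"
      proof (cases "e \<in> delta E v")
        case True
        then obtain u where "e = {v, u}" "{v, u} \<in> E" using delta_v by auto
        then show ?thesis by (auto simp: edges_in_def)
      next
        case False then show ?thesis using e by (auto simp: edges_in_def)
      qed
    qed
  qed
  moreover have "edges_in E ?N \<inter> delta E v = {}" using vN by (auto simp: edges_in_def delta_def)
  moreover have "finite (edges_in E ?N)" "finite (delta E v)" using finE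
    by (auto simp: edges_in_def delta_def)
  ultimately have sE: "(\<Sum>e\<in>edges_in E (insert v ?N). y e) = (\<Sum>e\<in>edges_in E ?N. y e) + (\<Sum>e\<in>delta E v. y e)"
    by (simp add: sum.union_disjoint)
  have sX: "(\<Sum>w\<in>insert v ?N. x w) = x v + (\<Sum>w\<in>?N. x w)" using finN vN by simp
  have "(\<Sum>w\<in>insert v ?N. x w) - (\<Sum>e\<in>edges_in E (insert v ?N). y e) \<le> 1"
    using cl Kv_max by blast
  then show ?thesis using sE sX by simp
qed

lemma restrict_Q:
  assumes Q: "(x, y) \<in> clique_polyhedron V E"
  shows "(x(v := 0), (\<lambda>e. if v \<in> e then 0 else y e)) \<in> clique_polyhedron (V - {v}) (edges_in E (V - {v}))"
proof -
  let ?V' = "V - {v}" and ?E' = "edges_in E (V - {v})" and ?N = "{u. {v, u} \<in> E}"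
  let ?y' = "\<lambda>e. if v \<in> e then 0 else y e"
  have x0: "\<forall>w. w \<notin> V \<longrightarrow> x w = 0" and y0: "\<forall>e. e \<notin> E \<longrightarrow> y e = 0"
    and deg: "\<forall>w\<in>V. (\<Sum>e\<in>delta E w. y e) \<le> x w" and ynn: "\<forall>e\<in>E. - y e \<le> 0"
    and cl: "\<forall>K. maximal_clique V E K \<longrightarrow> (\<Sum>w\<in>K. x w) - (\<Sum>e\<in>edges_in E K. y e) \<le> 1"
    using Q by (auto simp: clique_polyhedron_def)
  have ynn': "\<And>e. y e \<ge> 0" using ynn y0 by (metis neg_le_0_iff_le order_refl)
  have finE: "finite E" by (rule sg_finite_E[OF sg])
  have finV: "finite V" by (rule sg_finite[OF sg])
  have Esub: "E \<subseteq> Pow V" by (rule sg_E_sub[OF sg])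
  have p1: "\<forall>w. w \<notin> ?V' \<longrightarrow> (x(v := 0)) w = 0" using x0 by auto
  have p2: "\<forall>e. e \<notin> ?E' \<longrightarrow> ?y' e = 0" using y0 Esub by (auto simp: edges_in_def)
  have p3: "\<forall>w\<in>?V'. (\<Sum>e\<in>delta ?E' w. ?y' e) \<le> (x(v := 0)) w"
  proof
    fix w assume w: "w \<in> ?V'"
    have "(\<Sum>e\<in>delta ?E' w. ?y' e) \<le> (\<Sum>e\<in>delta E w. y e)"
    proof -
      have "(\<Sum>e\<in>delta ?E' w. ?y' e) = (\<Sum>e\<in>delta ?E' w. y e)"
        by (intro sum.cong) (auto simp: delta_def edges_in_def)
      also have "\<dots> \<le> (\<Sum>e\<in>delta E w. y e)"
        using finE ynn' by (intro sum_mono2) (auto simp: delta_def edges_in_def)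
      finally show ?thesis .
    qed
    also have "\<dots> \<le> x w" using deg w by auto
    finally show "(\<Sum>e\<in>delta ?E' w. ?y' e) \<le> (x(v := 0)) w" using w by simp
  qed
  have p4: "\<forall>e\<in>?E'. - ?y' e \<le> 0" using ynn' by simp
  have p5: "\<forall>K. maximal_clique ?V' ?E' K \<longrightarrow> (\<Sum>w\<in>K. (x(v := 0)) w) - (\<Sum>e\<in>edges_in ?E' K. ?y' e) \<le> 1"
  proof (intro allI impI)
    fix K assume K: "maximal_clique ?V' ?E' K"
    have KV: "K \<subseteq> ?V'" using K by (auto simp: maximal_clique_def clique_def)
    have fK: "finite K" using KV finV by (auto intro: finite_subset)
    have eqx: "(\<Sum>w\<in>K. (x(v := 0)) w) = (\<Sum>w\<in>K. x w)" using KV by (intro sum.cong) auto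
    have eqE: "edges_in ?E' K = edges_in E K" using KV by (auto simp: edges_in_def)
    have eqy: "(\<Sum>e\<in>edges_in E K. ?y' e) = (\<Sum>e\<in>edges_in E K. y e)"
      using KV by (intro sum.cong) (auto simp: edges_in_def)
    have Kcl: "clique V E K" using K by (auto simp: maximal_clique_def clique_def edges_in_def)
    have "(\<Sum>w\<in>K. x w) - (\<Sum>e\<in>edges_in E K. y e) \<le> 1"
    proof (cases "maximal_clique V E K")
      case True then show ?thesis using cl by blast
    next
      case False
      then obtain K'' where K'': "clique V E K''" "K \<subseteq> K''" "K'' \<noteq> K"
        using Kcl by (auto simp: maximal_clique_def)
      have "v \<in> K''"
      proof (rule ccontr)
        assume "v \<notin> K''"
        then have "clique ?V' ?E' K''" using K'' by (auto simp: clique_def edges_in_def)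
        then show False using K K'' by (auto simp: maximal_clique_def)
      qed
      have "K \<subseteq> ?N"
      proof
        fix z assume z: "z \<in> K"
        then have "z \<in> K''" "z \<noteq> v" using K'' KV by auto
        then have "{z, v} \<in> E" using K'' \<open>v \<in> K''\<close> by (auto simp: clique_def)
        then show "z \<in> ?N" by (simp add: insert_commute)
      qed
      moreover have "clique ?V' ?E' ?N"
        unfolding clique_def
      proof (intro conjI ballI impI)
        show "?N \<subseteq> ?V'" using N_sub by blast
        fix a b assume ab: "a \<in> ?N" "b \<in> ?N" "a \<noteq> b"
        have "{a, b} \<in> E" using ab N_clique by simp
        moreover have "a \<in> ?V'" "b \<in> ?V'" using ab N_sub by auto
        ultimately show "{a, b} \<in> ?E'" by (simp add: edges_in_def)
      qed
      ultimately have KN: "K = ?N" using K by (auto simp: maximal_clique_def)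
      have "?N \<subseteq> V" using N_sub by blast
      then have finN: "finite ?N" using finV by (rule finite_subset)
      have vN: "v \<notin> ?N" using sg_noloop[OF sg, of v] by simp
      have "edges_in E (insert v ?N) = edges_in E ?N \<union> delta E v"
      proof
        show "edges_in E (insert v ?N) \<subseteq> edges_in E ?N \<union> delta E v"
          by (auto simp: edges_in_def delta_def)
        show "edges_in E ?N \<union> delta E v \<subseteq> edges_in E (insert v ?N)"
        proof
          fix e assume e: "e \<in> edges_in E ?N \<union> delta E v"
          show "e \<in> edges_in E (insert v ?N)"
          proof (cases "e \<in> delta E v")
            case True
            then obtain u where "e = {v, u}" "{v, u} \<in> E" using delta_v by auto
            then show ?thesis by (auto simp: edges_in_def)
          next
            case False then show ?thesis using e by (auto simp: edges_in_def)
          qed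
        qed
      qed
      moreover have "edges_in E ?N \<inter> delta E v = {}" using vN by (auto simp: edges_in_def delta_def)
      moreover have "finite (edges_in E ?N)" "finite (delta E v)" using finE
        by (auto simp: edges_in_def delta_def)
      ultimately have sE: "(\<Sum>e\<in>edges_in E (insert v ?N). y e) = (\<Sum>e\<in>edges_in E ?N. y e) + (\<Sum>e\<in>delta E v. y e)"
        by (simp add: sum.union_disjoint)
      have sX: "(\<Sum>w\<in>insert v ?N. x w) = x v + (\<Sum>w\<in>?N. x w)" using finN vN by simp
      have "(\<Sum>w\<in>insert v ?N. x w) - (\<Sum>e\<in>edges_in E (insert v ?N). y e) \<le> 1"
        using cl Kv_max by blast
      moreover have "(\<Sum>e\<in>delta E v. y e) \<le> x v" using deg vV by blast
      ultimately show ?thesis using KN sE sX by simp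
    qed
    then show "(\<Sum>w\<in>K. (x(v := 0)) w) - (\<Sum>e\<in>edges_in ?E' K. ?y' e) \<le> 1"
      using eqx eqE eqy by simp
  qed
  show ?thesis unfolding clique_polyhedron_def using p1 p2 p3 p4 p5 by blast
qed

lemma N_clique_G: "clique V E {u. {v, u} \<in> E}"
  unfolding clique_def
proof (intro conjI ballI impI)
  show "{u. {v, u} \<in> E} \<subseteq> V" using N_sub by blast
  fix a b assume ab: "a \<in> {u. {v, u} \<in> E}" "b \<in> {u. {v, u} \<in> E}" "a \<noteq> b"
  show "{a, b} \<in> E" using ab N_clique by simp
qed

lemma extend:
  assumes Q: "(x, y) \<in> clique_polyhedron V E"
    and P': "(x(v := 0), (\<lambda>e. if v \<in> e then 0 else y e)) \<in> P_xy (V - {v}) (edges_in E (V - {v}))"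
  shows "(x, y) \<in> P_xy V E"
proof -
  let ?V' = "V - {v}" and ?E' = "edges_in E (V - {v})" and ?N = "{u. {v, u} \<in> E}"
  let ?C' = "{S. co_2_plex ?V' ?E' S}" and ?C = "{S. co_2_plex V E S}"
  obtain lam' where l0': "\<forall>S. co_2_plex ?V' ?E' S \<longrightarrow> lam' S \<ge> 0"
    and l1': "(\<Sum>S\<in>?C'. lam' S) = 1"
    and xd': "\<And>w. (x(v := 0)) w = (\<Sum>S\<in>?C'. lam' S * indicator S w)"
    and yd0: "\<And>e. (if v \<in> e then 0 else y e) = (\<Sum>S\<in>?C'. lam' S * indicator (edges_in ?E' S) e)"
    using P_elem[OF P'] by blast
  have x0: "\<forall>w. w \<notin> V \<longrightarrow> x w = 0" and y0: "\<forall>e. e \<notin> E \<longrightarrow> y e = 0"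
    and deg: "\<forall>w\<in>V. (\<Sum>e\<in>delta E w. y e) \<le> x w" and ynn: "\<forall>e\<in>E. - y e \<le> 0"
    using Q by (auto simp: clique_polyhedron_def)
  have ynn': "\<And>e. y e \<ge> 0" using ynn y0 by (metis neg_le_0_iff_le order_refl)
  have finE: "finite E" by (rule sg_finite_E[OF sg])
  have finV: "finite V" by (rule sg_finite[OF sg])
  have finC': "finite ?C'" by (rule fin_CP[OF G'_sg])
  have finC: "finite ?C" by (rule fin_CP[OF sg])
  have C'sub: "S \<subseteq> ?V'" if "S \<in> ?C'" for S using that by (simp add: co_2_plex_def)
  have C'co2: "co_2_plex V E S" if "S \<in> ?C'" for S
    using co2_induced_iff[OF C'sub[OF that], of V E] that by auto
  have vS: "v \<notin> S" if "S \<in> ?C'" for S using C'sub[OF that] by auto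
  have yd': "\<And>e. (if v \<in> e then 0 else y e) = (\<Sum>S\<in>?C'. lam' S * indicator (edges_in E S) e)"
  proof -
    fix e
    have "(\<Sum>S\<in>?C'. lam' S * indicator (edges_in ?E' S) e) = (\<Sum>S\<in>?C'. lam' S * indicator (edges_in E S) e)"
      by (intro sum.cong refl) (simp add: edges_in_induced[OF C'sub])
    then show "(if v \<in> e then 0 else y e) = (\<Sum>S\<in>?C'. lam' S * indicator (edges_in E S) e)"
      using yd0[of e] by simp
  qed
  have l0: "\<forall>S\<in>?C'. lam' S \<ge> 0" using l0' by simp
  have "?N \<subseteq> V" using N_sub by blast
  then have finN: "finite ?N" using finV by (rule finite_subset)
  have vN: "v \<notin> ?N" using sg_noloop[OF sg, of v] by simp
  have uv: "u \<noteq> v" if "u \<in> ?N" for u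
  proof -
    have "{v, u} \<in> E" using that by simp
    then have "u \<in> V - {v}" by (rule N_sub)
    then show ?thesis by simp
  qed

  define A where "A S \<longleftrightarrow> S \<inter> ?N = {}" for S
  define B where "B u S \<longleftrightarrow> u \<in> S \<and> (\<forall>t\<in>S. {t, u} \<notin> E)" for u S
  define a where "a = (\<Sum>S\<in>?C'. if A S then lam' S else 0)"
  define b where "b u = (\<Sum>S\<in>?C'. if B u S then lam' S else 0)" for u
  define r where "r = x v - (\<Sum>e\<in>delta E v. y e)"
  define \<alpha> where "\<alpha> = r / a"
  define \<beta> where "\<beta> u = y {v, u} / b u" for u
  define c where "c S = (if A S then \<alpha> else 0) + (\<Sum>u\<in>?N. if B u S then \<beta> u else 0)" for S
  define lam where "lam T = (if v \<in> T then lam' (T - {v}) * c (T - {v}) else lam' T * (1 - c T))" for T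

  have r0: "r \<ge> 0" using deg vV by (simp add: r_def)
  have ra: "r \<le> a"
  proof -
    have xN: "(\<Sum>w\<in>?N. x w) = (\<Sum>S\<in>?C'. lam' S * real (card (?N \<inter> S)))"
    proof -
      have "(\<Sum>w\<in>?N. x w) = (\<Sum>w\<in>?N. \<Sum>S\<in>?C'. lam' S * indicator S w)"
      proof (rule sum.cong[OF refl])
        fix w assume "w \<in> ?N"
        then have "w \<noteq> v" using vN by blast
        then show "x w = (\<Sum>S\<in>?C'. lam' S * indicator S w)" using xd'[of w] by simp
      qed
      also have "\<dots> = (\<Sum>S\<in>?C'. lam' S * real (card (?N \<inter> S)))"
        using finN by (subst sum.swap) (simp add: sum_distrib_left[symmetric] sum_ind_real)
      finally show ?thesis .
    qed
    have fEN: "finite (edges_in E ?N)" using finE by (simp add: edges_in_def)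
    have yN: "(\<Sum>e\<in>edges_in E ?N. y e) = (\<Sum>S\<in>?C'. lam' S * real (card (edges_in E ?N \<inter> edges_in E S)))"
    proof -
      have "(\<Sum>e\<in>edges_in E ?N. y e) = (\<Sum>e\<in>edges_in E ?N. \<Sum>S\<in>?C'. lam' S * indicator (edges_in E S) e)"
      proof (intro sum.cong refl)
        fix e assume "e \<in> edges_in E ?N"
        then have "v \<notin> e" using vN by (auto simp: edges_in_def)
        then show "y e = (\<Sum>S\<in>?C'. lam' S * indicator (edges_in E S) e)" using yd'[of e] by simp
      qed
      also have "\<dots> = (\<Sum>S\<in>?C'. lam' S * real (card (edges_in E ?N \<inter> edges_in E S)))"
        using fEN by (subst sum.swap) (simp add: sum_distrib_left[symmetric] sum_ind_real)
      finally show ?thesis .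
    qed
    have pw: "lam' S * (if A S then 0 else 1) \<le> lam' S * (real (card (?N \<inter> S)) - real (card (edges_in E ?N \<inter> edges_in E S)))"
      if S: "S \<in> ?C'" for S
    proof (cases "A S")
      case True
      have "card (edges_in E ?N \<inter> edges_in E S) = 0"
      proof -
        have "edges_in E ?N \<inter> edges_in E S \<subseteq> {e \<in> E. e \<subseteq> ?N \<inter> S}" by (auto simp: edges_in_def)
        moreover have "{e \<in> E. e \<subseteq> ?N \<inter> S} = {}"
        proof -
          have ee: "e \<in> E \<Longrightarrow> e \<subseteq> {} \<Longrightarrow> False" for e using sg_edge[OF sg, of e] by auto
          have NS: "?N \<inter> S = {}" using True by (auto simp: A_def)
          show ?thesis unfolding NS using ee by blast
        qed
        ultimately show ?thesis by (metis card.empty subset_empty)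
      qed
      then show ?thesis using True l0 S by (simp add: A_def Int_commute)
    next
      case False
      then have "?N \<inter> S \<noteq> {}" by (simp add: A_def Int_commute)
      then have one1: "1 \<le> real (card (?N \<inter> S)) - real (card (edges_in E ?N \<inter> edges_in E S))"
        by (rule clique_co2_count[OF sg C'co2[OF S] N_clique_G])
      show ?thesis using mult_left_mono[OF one1, of "lam' S"] False l0 S by simp
    qed
    have "1 - a = (\<Sum>S\<in>?C'. lam' S * (if A S then 0 else 1))"
    proof -
      have "(\<Sum>S\<in>?C'. lam' S * (if A S then 0 else 1)) = (\<Sum>S\<in>?C'. lam' S - (if A S then lam' S else 0))"
        by (intro sum.cong) auto
      also have "\<dots> = 1 - a" using l1' by (simp add: sum_subtractf a_def)
      finally show ?thesis by simp
    qed
    also have "\<dots> \<le> (\<Sum>S\<in>?C'. lam' S * (real (card (?N \<inter> S)) - real (card (edges_in E ?N \<inter> edges_in E S))))"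
      using pw by (intro sum_mono) auto
    also have "\<dots> = (\<Sum>w\<in>?N. x w) - (\<Sum>e\<in>edges_in E ?N. y e)"
      using xN yN by (simp add: right_diff_distrib sum_subtractf)
    also have "\<dots> \<le> 1 - r" using Kv_ineq[OF Q] by (simp add: r_def)
    finally show ?thesis by simp
  qed
  have bu: "y {v, u} \<le> b u" if u: "u \<in> ?N" for u
  proof -
    let ?D = "{e \<in> delta E u. v \<notin> e}"
    have uV: "u \<in> V" using N_sub u by auto
    have fD: "finite ?D" using finE by (simp add: delta_def)
    have uv': "u \<noteq> v" using uv[OF u] .
    have dU: "delta E u = insert {v, u} ?D"
    proof
      show "delta E u \<subseteq> insert {v, u} ?D"
      proof
        fix e assume e: "e \<in> delta E u"
        show "e \<in> insert {v, u} ?D"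
        proof (cases "v \<in> e")
          case True
          have "e \<in> E" "u \<in> e" using e by (auto simp: delta_def)
          then obtain p q where pq: "p \<noteq> q" "e = {p, q}" using sg_edge[OF sg, of e] by auto
          then have "e = {v, u}" using True \<open>u \<in> e\<close> uv' by auto
          then show ?thesis by simp
        next
          case False then show ?thesis using e by simp
        qed
      qed
      show "insert {v, u} ?D \<subseteq> delta E u" using u by (auto simp: delta_def)
    qed
    have nD: "{v, u} \<notin> ?D" by simp
    have "(\<Sum>e\<in>delta E u. y e) = (\<Sum>e\<in>insert {v, u} ?D. y e)"
      using dU by (rule arg_cong)
    also have "\<dots> = y {v, u} + (\<Sum>e\<in>?D. y e)" by (rule sum.insert[OF fD nD])
    finally have "y {v, u} + (\<Sum>e\<in>?D. y e) = (\<Sum>e\<in>delta E u. y e)" by simp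
    also have "\<dots> \<le> x u" using deg uV by blast
    finally have h1: "y {v, u} \<le> x u - (\<Sum>e\<in>?D. y e)" by simp
    have xu: "x u = (\<Sum>S\<in>?C'. lam' S * indicator S u)" using xd'[of u] uv[OF u] by simp
    have yD: "(\<Sum>e\<in>?D. y e) = (\<Sum>S\<in>?C'. lam' S * real (card (?D \<inter> edges_in E S)))"
    proof -
      have "(\<Sum>e\<in>?D. y e) = (\<Sum>e\<in>?D. \<Sum>S\<in>?C'. lam' S * indicator (edges_in E S) e)"
      proof (intro sum.cong refl)
        fix e assume "e \<in> ?D"
        then show "y e = (\<Sum>S\<in>?C'. lam' S * indicator (edges_in E S) e)" using yd'[of e] by simp
      qed
      also have "\<dots> = (\<Sum>S\<in>?C'. lam' S * real (card (?D \<inter> edges_in E S)))"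
        using fD by (subst sum.swap) (simp add: sum_distrib_left[symmetric] sum_ind_real)
      finally show ?thesis .
    qed
    have pw: "lam' S * (indicator S u - real (card (?D \<inter> edges_in E S))) \<le> (if B u S then lam' S else 0)"
      if S: "S \<in> ?C'" for S
    proof (cases "B u S")
      case True
      then show ?thesis using l0 S by (simp add: mult_left_le indicator_def B_def)
    next
      case False
      show ?thesis
      proof (cases "u \<in> S")
        case True
        then obtain t where t: "t \<in> S" "{t, u} \<in> E" using False by (auto simp: B_def)
        have "{t, u} \<in> ?D \<inter> edges_in E S" using t True vS[OF S] by (auto simp: delta_def edges_in_def)
        moreover have "finite (?D \<inter> edges_in E S)" using fD by simp
        ultimately have "card (?D \<inter> edges_in E S) \<ge> 1"
          by (metis One_nat_def Suc_leI card_gt_0_iff empty_iff)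
        then show ?thesis using True False l0 S by (simp add: mult_nonneg_nonpos)
      next
        case F2: False
        then show ?thesis using False l0 S by (simp add: mult_nonneg_nonpos)
      qed
    qed
    have "x u - (\<Sum>e\<in>?D. y e) = (\<Sum>S\<in>?C'. lam' S * (indicator S u - real (card (?D \<inter> edges_in E S))))"
      using xu yD by (simp add: right_diff_distrib sum_subtractf)
    also have "\<dots> \<le> b u" unfolding b_def using pw by (intro sum_mono) auto
    finally show ?thesis using h1 by simp
  qed

  have \<alpha>a: "\<alpha> * a = r"
  proof (cases "a = 0")
    case True then show ?thesis using r0 ra by (simp add: \<alpha>_def)
  next
    case False then show ?thesis by (simp add: \<alpha>_def)
  qed
  have \<alpha>01: "0 \<le> \<alpha>" "\<alpha> \<le> 1"
    using r0 ra by (auto simp: \<alpha>_def divide_le_eq_1 divide_nonneg_nonneg)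
  have \<beta>b: "\<beta> u * b u = y {v, u}" if "u \<in> ?N" for u
  proof (cases "b u = 0")
    case True then show ?thesis using bu[OF that] ynn'[of "{v, u}"] by (simp add: \<beta>_def)
  next
    case False then show ?thesis by (simp add: \<beta>_def)
  qed
  have \<beta>01: "0 \<le> \<beta> u" "\<beta> u \<le> 1" if "u \<in> ?N" for u
    using bu[OF that] ynn'[of "{v, u}"] by (auto simp: \<beta>_def divide_le_eq_1 divide_nonneg_nonneg)

  have AB: "\<not> B u S" if "A S" "u \<in> ?N" for u S using that by (auto simp: A_def B_def)
  have BB: "u = w" if "B u S" "B w S" "u \<in> ?N" "w \<in> ?N" for u w S
  proof (rule ccontr)
    assume "u \<noteq> w"
    then have "{u, w} \<in> E" using that(3,4) N_clique by simp
    then show False using that(1,2) by (auto simp: B_def)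
  qed
  have sumB: "(\<Sum>w\<in>?N. if B w S then \<beta> w else 0) = (if B u S then \<beta> u else 0)"
    if "u \<in> ?N" "B u S \<or> u \<in> S" for u S
  proof -
    have "(\<Sum>w\<in>?N. if B w S then \<beta> w else 0) = (\<Sum>w\<in>?N. if w = u then (if B u S then \<beta> u else 0) else 0)"
    proof (intro sum.cong refl)
      fix w assume w: "w \<in> ?N"
      show "(if B w S then \<beta> w else 0) = (if w = u then (if B u S then \<beta> u else 0) else 0)"
      proof (cases "w = u")
        case False
        have "\<not> B w S"
        proof
          assume Bw: "B w S"
          show False
          proof (cases "B u S")
            case True then show False using BB[OF Bw True w that(1)] False by simp
          next
            case NB: False
            then have "u \<in> S" using that(2) by simp
            moreover have "{u, w} \<in> E" using that(1) w False N_clique by simp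
            ultimately show False using Bw by (auto simp: B_def)
          qed
        qed
        then show ?thesis using False by simp
      qed simp
    qed
    also have "\<dots> = (if B u S then \<beta> u else 0)" using finN that(1) by simp
    finally show ?thesis .
  qed
  have sumB0: "(\<Sum>w\<in>?N. if B w S then \<beta> w else 0) = 0" if "\<forall>u\<in>?N. \<not> B u S" for S
    using that by (intro sum.neutral) auto
  have c01: "0 \<le> c S \<and> c S \<le> 1" for S
  proof (cases "A S")
    case True
    then have "c S = \<alpha>" using sumB0[of S] AB[OF True] by (simp add: c_def)
    then show ?thesis using \<alpha>01 by simp
  next
    case False
    show ?thesis
    proof (cases "\<exists>u\<in>?N. B u S")
      case True
      then obtain u where u: "u \<in> ?N" "B u S" by blast
      then have "c S = \<beta> u" using sumB[of u S] False by (simp add: c_def)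
      then show ?thesis using \<beta>01[OF u(1)] by simp
    next
      case F2: False
      then have "c S = 0" using sumB0[of S] False by (simp add: c_def)
      then show ?thesis by simp
    qed
  qed
  have cu: "c S * indicator S u = (if B u S then \<beta> u else 0)" if u: "u \<in> ?N" for u S
  proof (cases "u \<in> S")
    case True
    then have "\<not> A S" using u by (auto simp: A_def)
    then have "c S = (if B u S then \<beta> u else 0)" using sumB[OF u] True by (simp add: c_def)
    then show ?thesis using True by simp
  next
    case False
    then show ?thesis by (simp add: B_def)
  qed
  have ins: "co_2_plex V E (insert v S)" if S: "S \<in> ?C'" and c0: "c S \<noteq> 0" for S
  proof -
    have co: "co_2_plex V E S" by (rule C'co2[OF S])
    have SV: "S \<subseteq> V" using C'sub[OF S] by auto
    have finS: "finite S" using SV finV by (rule finite_subset)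
    have "A S \<or> (\<exists>u\<in>?N. B u S)"
    proof (rule ccontr)
      assume "\<not> ?thesis"
      then have "c S = 0" using sumB0[of S] by (simp add: c_def)
      then show False using c0 by simp
    qed
    then show ?thesis
    proof
      assume AS: "A S"
      show ?thesis unfolding co_2_plex_def
      proof (intro conjI ballI)
        show "insert v S \<subseteq> V" using SV vV by simp
        fix w assume w: "w \<in> insert v S"
        show "card {t \<in> insert v S. {t, w} \<in> E} \<le> 1"
        proof (cases "w = v")
          case True
          have e: "{t \<in> insert v S. {t, w} \<in> E} = {}"
            using AS True sg_noloop[OF sg, of v] by (auto simp: A_def insert_commute)
          show ?thesis unfolding e by simp
        next
          case False
          then have wS: "w \<in> S" using w by simp
          have "{t \<in> insert v S. {t, w} \<in> E} = {t \<in> S. {t, w} \<in> E}"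
            using AS wS by (auto simp: A_def)
          then show ?thesis using co wS by (simp add: co_2_plex_def)
        qed
      qed
    next
      assume "\<exists>u\<in>?N. B u S"
      then obtain u where u: "u \<in> ?N" "B u S" by blast
      have uS: "u \<in> S" and iso: "\<forall>t\<in>S. {t, u} \<notin> E" using u by (auto simp: B_def)
      have SN: "S \<inter> ?N = {u}"
      proof
        show "S \<inter> ?N \<subseteq> {u}"
        proof
          fix t assume t: "t \<in> S \<inter> ?N"
          show "t \<in> {u}"
          proof (rule ccontr)
            assume "t \<notin> {u}"
            then have "{t, u} \<in> E" using t u(1) N_clique by simp
            then show False using iso t by auto
          qed
        qed
      qed (use uS u in simp)
      show ?thesis unfolding co_2_plex_def
      proof (intro conjI ballI)
        show "insert v S \<subseteq> V" using SV vV by simp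
        fix w assume w: "w \<in> insert v S"
        show "card {t \<in> insert v S. {t, w} \<in> E} \<le> 1"
        proof (cases "w = v")
          case True
          have "{t \<in> insert v S. {t, w} \<in> E} \<subseteq> {u}"
          proof
            fix t assume t: "t \<in> {t \<in> insert v S. {t, w} \<in> E}"
            then have "t \<noteq> v" using True sg_noloop[OF sg, of v] by auto
            then have "t \<in> S \<inter> ?N" using t True by (auto simp: insert_commute)
            then show "t \<in> {u}" using SN by simp
          qed
          then show ?thesis by (metis card.empty card.insert card_mono empty_iff finite.emptyI finite.insertI le_SucI order_refl One_nat_def)
        next
          case False
          then have wS: "w \<in> S" using w by simp
          show ?thesis
          proof (cases "w = u")
            case True
            have "{t \<in> insert v S. {t, w} \<in> E} \<subseteq> {v}"
              using iso True by auto
            then show ?thesis by (metis card.empty card.insert card_mono empty_iff finite.emptyI finite.insertI le_SucI order_refl One_nat_def)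
          next
            case wu: False
            have "{v, w} \<notin> E"
            proof
              assume "{v, w} \<in> E"
              then have "w \<in> S \<inter> ?N" using wS by simp
              then show False using SN wu by auto
            qed
            then have "{t \<in> insert v S. {t, w} \<in> E} = {t \<in> S. {t, w} \<in> E}"
              by auto
            then show ?thesis using co wS by (simp add: co_2_plex_def)
          qed
        qed
      qed
    qed
  qed
  define D where "D = {S \<in> ?C'. co_2_plex V E (insert v S)}"
  have DC': "D \<subseteq> ?C'" unfolding D_def by (rule Collect_restrict)
  have Cdec: "?C = ?C' \<union> insert v ` D"
  proof
    show "?C \<subseteq> ?C' \<union> insert v ` D"
    proof
      fix T assume T: "T \<in> ?C"
      then have Tco: "co_2_plex V E T" by simp
      have TV: "T \<subseteq> V" using Tco by (simp add: co_2_plex_def)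
      show "T \<in> ?C' \<union> insert v ` D"
      proof (cases "v \<in> T")
        case False
        then have s: "T \<subseteq> ?V'" using TV by blast
        have "co_2_plex ?V' ?E' T" using co2_induced_iff[OF s, of V E] Tco by blast
        then show ?thesis by simp
      next
        case True
        have s: "T - {v} \<subseteq> ?V'" using TV by blast
        have "co_2_plex V E (T - {v})" using co2_subset[OF sg Tco, of "T - {v}"] by blast
        then have c1: "co_2_plex ?V' ?E' (T - {v})" using co2_induced_iff[OF s, of V E] by blast
        have eqT: "insert v (T - {v}) = T" using True by blast
        have "T - {v} \<in> D" unfolding D_def using c1 Tco eqT by simp
        then have "T \<in> insert v ` D" using eqT by (metis imageI)
        then show ?thesis by (rule UnI2)
      qed
    qed
    show "?C' \<union> insert v ` D \<subseteq> ?C"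
    proof
      fix T assume "T \<in> ?C' \<union> insert v ` D"
      then show "T \<in> ?C"
      proof
        assume "T \<in> ?C'"
        then show ?thesis using C'co2 by blast
      next
        assume "T \<in> insert v ` D"
        then obtain S where "S \<in> D" "T = insert v S" by blast
        then show ?thesis unfolding D_def by simp
      qed
    qed
  qed
  have disj: "?C' \<inter> insert v ` D = {}"
  proof (rule ccontr)
    assume "?C' \<inter> insert v ` D \<noteq> {}"
    then obtain T where "T \<in> ?C'" "T \<in> insert v ` D" by blast
    then have "v \<notin> T" "v \<in> T" using vS by blast+
    then show False by simp
  qed
  have finD: "finite D" using finC' DC' by (rule finite_subset[rotated])
  have vD: "v \<notin> S" if "S \<in> D" for S using DC' that vS by blast
  have injD: "inj_on (insert v) D"
  proof (rule inj_onI)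
    fix S1 S2 assume a1: "S1 \<in> D" "S2 \<in> D" "insert v S1 = insert v S2"
    have "S1 = insert v S1 - {v}" using vD[OF a1(1)] by simp
    also have "\<dots> = insert v S2 - {v}" using a1(3) by simp
    also have "\<dots> = S2" using vD[OF a1(2)] by simp
    finally show "S1 = S2" .
  qed
  have decomp: "(\<Sum>T\<in>?C. lam T * g T) = (\<Sum>S\<in>?C'. lam' S * ((1 - c S) * g S + c S * g (insert v S)))" for g
  proof -
    have fI: "finite (insert v ` D)" using finD by (rule finite_imageI)
    have "(\<Sum>T\<in>?C. lam T * g T) = (\<Sum>T\<in>?C' \<union> insert v ` D. lam T * g T)"
      using Cdec by (rule arg_cong)
    also have "\<dots> = (\<Sum>T\<in>?C'. lam T * g T) + (\<Sum>T\<in>insert v ` D. lam T * g T)"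
      by (rule sum.union_disjoint[OF finC' fI disj])
    also have "(\<Sum>T\<in>?C'. lam T * g T) = (\<Sum>S\<in>?C'. lam' S * (1 - c S) * g S)"
    proof (rule sum.cong[OF refl])
      fix S assume "S \<in> ?C'"
      then have "v \<notin> S" by (rule vS)
      then show "lam S * g S = lam' S * (1 - c S) * g S" unfolding lam_def by simp
    qed
    also have "(\<Sum>T\<in>insert v ` D. lam T * g T) = (\<Sum>S\<in>D. lam (insert v S) * g (insert v S))"
      by (rule sum.reindex_cong[OF injD refl refl])
    also have "\<dots> = (\<Sum>S\<in>D. lam' S * c S * g (insert v S))"
    proof (rule sum.cong[OF refl])
      fix S assume "S \<in> D"
      then have "v \<notin> S" by (rule vD)
      then have "insert v S - {v} = S" by simp
      then show "lam (insert v S) * g (insert v S) = lam' S * c S * g (insert v S)"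
        unfolding lam_def by simp
    qed
    also have "\<dots> = (\<Sum>S\<in>?C'. lam' S * c S * g (insert v S))"
    proof (rule sum.mono_neutral_left[OF finC' DC'])
      show "\<forall>S\<in>?C' - D. lam' S * c S * g (insert v S) = 0"
      proof
        fix S assume S: "S \<in> ?C' - D"
        have "c S = 0"
        proof (rule ccontr)
          assume "c S \<noteq> 0"
          then have "co_2_plex V E (insert v S)" using ins S by blast
          then have "S \<in> D" using S unfolding D_def by blast
          then show False using S by blast
        qed
        then show "lam' S * c S * g (insert v S) = 0" by simp
      qed
    qed
    finally show ?thesis by (simp add: sum.distrib[symmetric] algebra_simps)
  qed
  have lamnn: "\<forall>S. co_2_plex V E S \<longrightarrow> lam S \<ge> 0"
  proof (intro allI impI)
    fix T assume T: "co_2_plex V E T"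
    then have "T \<in> ?C' \<union> insert v ` D" using Cdec by blast
    then show "lam T \<ge> 0"
    proof
      assume TC: "T \<in> ?C'"
      then have "v \<notin> T" by (rule vS)
      then have "lam T = lam' T * (1 - c T)" unfolding lam_def by simp
      moreover have "lam' T \<ge> 0" using l0 TC by blast
      moreover have "1 - c T \<ge> 0" using c01[of T] by simp
      ultimately show ?thesis by simp
    next
      assume "T \<in> insert v ` D"
      then obtain S where S: "S \<in> D" "T = insert v S" by blast
      then have SC: "S \<in> ?C'" using DC' by blast
      have "v \<notin> S" using vD[OF S(1)] .
      then have "lam T = lam' S * c S" unfolding lam_def using S(2) by simp
      moreover have "lam' S \<ge> 0" using l0 SC by blast
      moreover have "c S \<ge> 0" using c01[of S] by simp
      ultimately show ?thesis by simp
    qed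
  qed
  have lam1: "(\<Sum>S\<in>?C. lam S) = 1"
  proof -
    have "(\<Sum>S\<in>?C. lam S) = (\<Sum>T\<in>?C. lam T * 1)" by simp
    also have "\<dots> = (\<Sum>S\<in>?C'. lam' S * ((1 - c S) * 1 + c S * 1))" by (rule decomp)
    also have "\<dots> = 1" using l1' by simp
    finally show ?thesis .
  qed
  have xeq: "x w = (\<Sum>T\<in>?C. lam T * indicator T w)" for w
  proof (cases "w = v")
    case False
    have "(\<Sum>T\<in>?C. lam T * indicator T w) = (\<Sum>S\<in>?C'. lam' S * ((1 - c S) * indicator S w + c S * indicator (insert v S) w))"
      by (rule decomp)
    also have "\<dots> = (\<Sum>S\<in>?C'. lam' S * indicator S w)"
    proof (rule sum.cong[OF refl])
      fix S
      have "indicator (insert v S) w = (indicator S w :: real)" using False by (simp add: indicator_def)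
      then show "lam' S * ((1 - c S) * indicator S w + c S * indicator (insert v S) w) = lam' S * indicator S w"
        by (simp add: algebra_simps)
    qed
    also have "\<dots> = x w" using xd'[of w] False by simp
    finally show ?thesis by simp
  next
    case True
    have "(\<Sum>T\<in>?C. lam T * indicator T w) = (\<Sum>S\<in>?C'. lam' S * ((1 - c S) * indicator S w + c S * indicator (insert v S) w))"
      by (rule decomp)
    also have "\<dots> = (\<Sum>S\<in>?C'. lam' S * c S)"
    proof (rule sum.cong[OF refl])
      fix S assume "S \<in> ?C'"
      then have "v \<notin> S" by (rule vS)
      then show "lam' S * ((1 - c S) * indicator S w + c S * indicator (insert v S) w) = lam' S * c S"
        using True by (simp add: indicator_def)
    qed
    also have "\<dots> = (\<Sum>S\<in>?C'. (if A S then lam' S else 0) * \<alpha> + (\<Sum>u\<in>?N. (if B u S then lam' S else 0) * \<beta> u))"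
    proof (rule sum.cong[OF refl])
      fix S
      have "lam' S * (\<Sum>u\<in>?N. if B u S then \<beta> u else 0) = (\<Sum>u\<in>?N. lam' S * (if B u S then \<beta> u else 0))"
        by (rule sum_distrib_left)
      also have "\<dots> = (\<Sum>u\<in>?N. (if B u S then lam' S else 0) * \<beta> u)"
        by (rule sum.cong[OF refl]) simp
      finally have h: "lam' S * (\<Sum>u\<in>?N. if B u S then \<beta> u else 0) = (\<Sum>u\<in>?N. (if B u S then lam' S else 0) * \<beta> u)" .
      have "lam' S * c S = lam' S * (if A S then \<alpha> else 0) + lam' S * (\<Sum>u\<in>?N. if B u S then \<beta> u else 0)"
        unfolding c_def by (rule distrib_left)
      then show "lam' S * c S = (if A S then lam' S else 0) * \<alpha> + (\<Sum>u\<in>?N. (if B u S then lam' S else 0) * \<beta> u)"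
        using h by simp
    qed
    also have "\<dots> = (\<Sum>S\<in>?C'. (if A S then lam' S else 0) * \<alpha>) + (\<Sum>S\<in>?C'. \<Sum>u\<in>?N. (if B u S then lam' S else 0) * \<beta> u)"
      by (rule sum.distrib)
    also have "(\<Sum>S\<in>?C'. (if A S then lam' S else 0) * \<alpha>) = a * \<alpha>"
      unfolding a_def by (rule sum_distrib_right[symmetric])
    also have "(\<Sum>S\<in>?C'. \<Sum>u\<in>?N. (if B u S then lam' S else 0) * \<beta> u) = (\<Sum>u\<in>?N. \<Sum>S\<in>?C'. (if B u S then lam' S else 0) * \<beta> u)"
      by (rule sum.swap)
    also have "\<dots> = (\<Sum>u\<in>?N. b u * \<beta> u)"
      unfolding b_def by (rule sum.cong[OF refl]) (rule sum_distrib_right[symmetric])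
    also have "(\<Sum>u\<in>?N. b u * \<beta> u) = (\<Sum>u\<in>?N. y {v, u})"
      by (rule sum.cong[OF refl]) (simp add: \<beta>b mult.commute)
    also have "a * \<alpha> = r" using \<alpha>a by (simp add: mult.commute)
    also have "r + (\<Sum>u\<in>?N. y {v, u}) = x v" by (simp add: r_def sum_delta_v)
    finally show ?thesis using True by simp
  qed
  have yeq: "y e = (\<Sum>T\<in>?C. lam T * indicator (edges_in E T) e)" for e
  proof -
    have dec: "(\<Sum>T\<in>?C. lam T * indicator (edges_in E T) e) = (\<Sum>S\<in>?C'. lam' S * ((1 - c S) * indicator (edges_in E S) e + c S * indicator (edges_in E (insert v S)) e))"
      by (rule decomp)
    show ?thesis
    proof (cases "v \<in> e")
      case False
      have "(\<Sum>T\<in>?C. lam T * indicator (edges_in E T) e) = (\<Sum>S\<in>?C'. lam' S * indicator (edges_in E S) e)"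
        unfolding dec
      proof (rule sum.cong[OF refl])
        fix S
        have "indicator (edges_in E (insert v S)) e = (indicator (edges_in E S) e :: real)"
          using False by (auto simp: indicator_def edges_in_def)
        then show "lam' S * ((1 - c S) * indicator (edges_in E S) e + c S * indicator (edges_in E (insert v S)) e) = lam' S * indicator (edges_in E S) e"
          by (simp add: algebra_simps)
      qed
      also have "\<dots> = y e" using yd'[of e] False by simp
      finally show ?thesis by simp
    next
      case True
      have i0: "indicator (edges_in E S) e = (0::real)" if "S \<in> ?C'" for S
      proof -
        have "v \<notin> S" using that by (rule vS)
        then have "e \<notin> edges_in E S" using True by (auto simp: edges_in_def)
        then show ?thesis by simp
      qed
      show ?thesis
      proof (cases "e \<in> E")
        case False
        have "(\<Sum>T\<in>?C. lam T * indicator (edges_in E T) e) = (\<Sum>T\<in>?C. 0)"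
        proof (rule sum.cong[OF refl])
          fix T
          have "e \<notin> edges_in E T" using False by (simp add: edges_in_def)
          then show "lam T * indicator (edges_in E T) e = 0" by simp
        qed
        then show ?thesis using y0 False by simp
      next
        case eE: True
        then have "e \<in> delta E v" using True by (simp add: delta_def)
        then obtain u where u: "u \<in> ?N" "e = {v, u}" using delta_v by blast
        have uv2: "u \<noteq> v" using uv[OF u(1)] .
        have i1: "indicator (edges_in E (insert v S)) e = (indicator S u :: real)" if "S \<in> ?C'" for S
        proof -
          have "e \<in> edges_in E (insert v S) \<longleftrightarrow> u \<in> S"
            using u eE uv2 by (auto simp: edges_in_def)
          then show ?thesis by (simp add: indicator_def)
        qed
        have "(\<Sum>T\<in>?C. lam T * indicator (edges_in E T) e) = (\<Sum>S\<in>?C'. (if B u S then lam' S else 0) * \<beta> u)"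
          unfolding dec
        proof (rule sum.cong[OF refl])
          fix S assume S: "S \<in> ?C'"
          have "lam' S * ((1 - c S) * indicator (edges_in E S) e + c S * indicator (edges_in E (insert v S)) e)
              = lam' S * (c S * indicator S u)" using i0[OF S] i1[OF S] by simp
          also have "\<dots> = lam' S * (if B u S then \<beta> u else 0)" using cu[OF u(1), of S] by simp
          also have "\<dots> = (if B u S then lam' S else 0) * \<beta> u" by simp
          finally show "lam' S * ((1 - c S) * indicator (edges_in E S) e + c S * indicator (edges_in E (insert v S)) e)
              = (if B u S then lam' S else 0) * \<beta> u" .
        qed
        also have "\<dots> = b u * \<beta> u" unfolding b_def by (rule sum_distrib_right[symmetric])
        also have "\<dots> = y e" using \<beta>b[OF u(1)] u by (simp add: mult.commute)
        finally show ?thesis by simp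
      qed
    qed
  qed
  have xfun: "x = (\<lambda>w. \<Sum>T\<in>?C. lam T * indicator T w)" using xeq by (rule ext)
  have yfun: "y = (\<lambda>e. \<Sum>T\<in>?C. lam T * indicator (edges_in E T) e)" using yeq by (rule ext)
  show ?thesis unfolding P_xy_def
    using lamnn lam1 xfun yfun by blast
qed
end

lemma Q_sub_P:
  "simple_graph V E \<Longrightarrow> \<not> has_hole V E \<Longrightarrow> clique_polyhedron V E \<subseteq> P_xy V E"
proof (induction "card V" arbitrary: V E rule: less_induct)
  case less
  note sg = less.prems(1) and nh = less.prems(2)
  show ?case
  proof (cases "V = {}")
    case True
    show ?thesis
    proof
      fix p assume p: "p \<in> clique_polyhedron V E"
      obtain x y where peq: "p = (x, y)" by (cases p)
      have x0: "\<And>w. x w = 0" using p True by (auto simp: clique_polyhedron_def peq)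
      have E0: "E = {}"
      proof (rule ccontr)
        assume "E \<noteq> {}"
        then obtain e where "e \<in> E" by blast
        then obtain u w where "u \<in> V" using sg_edge[OF sg, of e] by blast
        then show False using True by simp
      qed
      have y0: "\<And>e. y e = 0" using p E0 by (auto simp: clique_polyhedron_def peq)
      have C: "{S. co_2_plex V E S} = {{}}" using True by (auto simp: co_2_plex_def)
      define lam where "lam S = (if S = V then 1 else (0::real))" for S
      have l0: "\<forall>S. co_2_plex V E S \<longrightarrow> lam S \<ge> 0" by (simp add: lam_def)
      have l1: "(\<Sum>S\<in>{S. co_2_plex V E S}. lam S) = 1" unfolding C using True by (simp add: lam_def)
      have xf: "x = (\<lambda>w. \<Sum>S\<in>{S. co_2_plex V E S}. lam S * indicator S w)"
        unfolding C using x0 by (simp add: fun_eq_iff)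
      have yf: "y = (\<lambda>e. \<Sum>S\<in>{S. co_2_plex V E S}. lam S * indicator (edges_in E S) e)"
        unfolding C using y0 E0 by (simp add: fun_eq_iff edges_in_def)
      show "p \<in> P_xy V E" unfolding P_xy_def peq using l0 l1 xf yf by blast
    qed
  next
    case False
    obtain v where sv: "simplicial V E v" using exists_simplicial[OF sg nh False] by blast
    have vV: "v \<in> V" using sv by (simp add: simplicial_def)
    have finV: "finite V" by (rule sg_finite[OF sg])
    have card: "card (V - {v}) < card V" using finV vV by (metis card_Diff1_less)
    have sg': "simple_graph (V - {v}) (edges_in E (V - {v}))" by (rule sg_induced[OF sg]) blast
    have nh': "\<not> has_hole (V - {v}) (edges_in E (V - {v}))"
      using hole_induced[of "V - {v}" E V] nh by blast
    have IH: "clique_polyhedron (V - {v}) (edges_in E (V - {v})) \<subseteq> P_xy (V - {v}) (edges_in E (V - {v}))"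
      by (rule less.hyps[OF card sg' nh'])
    show ?thesis
    proof
      fix p assume p: "p \<in> clique_polyhedron V E"
      obtain x y where peq: "p = (x, y)" by (cases p)
      have Q: "(x, y) \<in> clique_polyhedron V E" using p peq by simp
      have "(x(v := 0), (\<lambda>e. if v \<in> e then 0 else y e)) \<in> P_xy (V - {v}) (edges_in E (V - {v}))"
        using restrict_Q[OF sg sv Q] IH by blast
      then have "(x, y) \<in> P_xy V E" by (rule extend[OF sg sv Q])
      then show "p \<in> P_xy V E" using peq by simp
    qed
  qed
qed

theorem mainTheorem4:
  fixes V :: "'a set" and E :: "'a set set"
  assumes "simple_graph V E" and "connected_graph V E"
  shows "chordal V E \<longleftrightarrow> P_xy V E = clique_polyhedron V E"
proof
  assume "chordal V E"
  then have nh: "\<not> has_hole V E" by (simp add: chordal_def)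
  show "P_xy V E = clique_polyhedron V E"
    using P_sub_Q[OF assms(1)] Q_sub_P[OF assms(1) nh] by blast
next
  assume eq: "P_xy V E = clique_polyhedron V E"
  show "chordal V E"
  proof (rule ccontr)
    assume "\<not> chordal V E"
    then have "has_hole V E" by (simp add: chordal_def)
    then show False using hole_neq[OF assms(1)] eq by blast
  qed
qed

end
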